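(* Let $\varphi\in\Phi_*$, let $a$ be measurable with linear growth, and let $X^{\varphi,a}$ be the Harris flow with infinitesimal covariance $\varphi$ and drift $a$. Then for every $T>0$, almost surely the family $\{X^{\varphi,a}_{0,s}:s\in[0,T]\}$ is uniformly continuous in $s$ with respect to the topology of uniform convergence on compact sets, i.e. a.s. for every $N>0$, $$\lim_{h\to0+}\ \sup_{s,t\in[0,T],\,|t-s|\le h}\ \sup_{|x|\le N}\big|X^{\varphi,a}_{0,t}(x)-X^{\varphi,a}_{0,s}(x)\big|=0 .$$
   Context: A Harris flow $X^{\varphi,a}$ with infinitesimal covariance $\varphi$ and drift $a$ is a family $\{X^{\varphi,a}_{s,t}:0\le s\le t\}$ of random non-decreasing càdlàg maps $\mathbb R\to\mathbb R$ (elements of $D^\uparrow(\mathbb R)$ with the $J_1$ topology) such that: (i) $X_{s,r}=X_{t,r}\circ X_{s,t}$ a.s. for $s\le t\le r$, $X_{s,s}=\mathrm{Id}$; (ii) increments over consecutive intervals are independent; (iii) stationarity of increments in law; (iv) $X_{0,h}\to\mathrm{Id}$ in probability as $h\to0+$; (v) for every $x,s$, $w_t(x,s)=X_{s,t}(x)-x-\int_s^ta(X_{s,r}(x))dr$, $t\ge s$, is a Wiener process from $0$ w.r.t. the filtration generated by the flow on $[s,t]$; (vi) $\langle w(x,s),w(y,s)\rangle_t=\int_s^t\varphi(X_{s,r}(x)-X_{s,r}(y))dr$. $\Phi_*$ is the set of continuous symmetric strictly positive definite $\varphi$ with $\varphi(0)=1$ that are Lipschitz outside every neighborhood of $0$.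 *)

theory Defs
  imports "HOL-Probability.Probability"
begin

definition strictly_pos_def_fun :: "(real \<Rightarrow> real) \<Rightarrow> bool" where
  "strictly_pos_def_fun \<phi> \<longleftrightarrow>
     (\<forall>(n::nat) (x::nat \<Rightarrow> real) (c::nat \<Rightarrow> real).
        inj_on x {..<n} \<and> (\<exists>i<n. c i \<noteq> 0) \<longrightarrow>
        (\<Sum>i<n. \<Sum>j<n. c i * c j * \<phi> (x i - x j)) > 0)"

definition Phi_star :: "(real \<Rightarrow> real) set" where
  "Phi_star = {\<phi>. continuous_on UNIV \<phi> \<and> (\<forall>x. \<phi> (- x) = \<phi> x) \<and>
      strictly_pos_def_fun \<phi> \<and> \<phi> 0 = 1 \<and>
      (\<forall>\<delta>>0. \<exists>L. \<forall>x y. \<delta> \<le> \<bar>x\<bar> \<and> \<delta> \<le> \<bar>y\<bar> \<longrightarrow> \<bar>\<phi> x - \<phi> y\<bar> \<le> L * \<bar>x - y\<bar>)}"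

definition linear_growth :: "(real \<Rightarrow> real) \<Rightarrow> bool" where
  "linear_growth a \<longleftrightarrow> (\<exists>C. \<forall>x. \<bar>a x\<bar> \<le> C * (1 + \<bar>x\<bar>))"

definition cadlag_nondecr :: "(real \<Rightarrow> real) \<Rightarrow> bool" where
  "cadlag_nondecr f \<longleftrightarrow> mono f \<and>
     (\<forall>x. continuous (at_right x) f) \<and> (\<forall>x. \<exists>l. (f \<longlongrightarrow> l) (at_left x))"

definition flow_filtration ::
  "'a measure \<Rightarrow> (real \<Rightarrow> real \<Rightarrow> 'a \<Rightarrow> real \<Rightarrow> real) \<Rightarrow> real \<Rightarrow> real \<Rightarrow> 'a measure" where
  "flow_filtration M X s t = sigma (space M)
     {(\<lambda>\<omega>. X u v \<omega> y) -` B \<inter> space M | u v y B.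
        s \<le> u \<and> u \<le> v \<and> v \<le> t \<and> B \<in> sets borel}"

definition martingale_from ::
  "'a measure \<Rightarrow> (real \<Rightarrow> 'a measure) \<Rightarrow> real \<Rightarrow> (real \<Rightarrow> 'a \<Rightarrow> real) \<Rightarrow> bool" where
  "martingale_from M F s P \<longleftrightarrow>
     (\<forall>t\<ge>s. P t \<in> borel_measurable (F t) \<and> integrable M (P t)) \<and>
     (\<forall>u t. s \<le> u \<and> u \<le> t \<longrightarrow>
        (\<forall>A\<in>sets (F u). (\<integral>\<omega>. indicator A \<omega> * P t \<omega> \<partial>M) = (\<integral>\<omega>. indicator A \<omega> * P u \<omega> \<partial>M)))"

definition wiener_from ::
  "'a measure \<Rightarrow> (real \<Rightarrow> 'a measure) \<Rightarrow> real \<Rightarrow> (real \<Rightarrow> 'a \<Rightarrow> real) \<Rightarrow> bool" where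
  "wiener_from M F s W \<longleftrightarrow>
     (\<forall>t\<ge>s. W t \<in> borel_measurable (F t)) \<and>
     (\<forall>\<omega>\<in>space M. W s \<omega> = 0) \<and>
     (AE \<omega> in M. continuous_on {s..} (\<lambda>t. W t \<omega>)) \<and>
     (\<forall>u t. s \<le> u \<and> u < t \<longrightarrow>
        distributed M lborel (\<lambda>\<omega>. W t \<omega> - W u \<omega>) (normal_density 0 (sqrt (t - u))) \<and>
        prob_space.indep_set M (sets (F u))
          {(\<lambda>\<omega>. W t \<omega> - W u \<omega>) -` B \<inter> space M | B. B \<in> sets borel})"

text \<open>Harris flow with infinitesimal covariance phi and drift a on the probability space M.
  X s t \<omega> is the random map X_{s,t}; it is only used for 0 \<le> s \<le> t.\<close>
definition harris_flow ::
  "'a measure \<Rightarrow> (real \<Rightarrow> real) \<Rightarrow> (real \<Rightarrow> real) \<Rightarrow> (real \<Rightarrow> real \<Rightarrow> 'a \<Rightarrow> real \<Rightarrow> real) \<Rightarrow> bool" where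
  "harris_flow M \<phi> a X \<longleftrightarrow>
     prob_space M \<and>
     \<comment> \<open>random elements of D-up(R)\<close>
     (\<forall>s t. 0 \<le> s \<and> s \<le> t \<longrightarrow>
        (\<forall>\<omega>\<in>space M. cadlag_nondecr (X s t \<omega>)) \<and>
        (\<forall>y. (\<lambda>\<omega>. X s t \<omega> y) \<in> borel_measurable M)) \<and>
     \<comment> \<open>(i) cocycle property\<close>
     (\<forall>s. 0 \<le> s \<longrightarrow> (\<forall>\<omega>\<in>space M. X s s \<omega> = id)) \<and>
     (\<forall>s t r. 0 \<le> s \<and> s \<le> t \<and> t \<le> r \<longrightarrow>
        (AE \<omega> in M. X s r \<omega> = X t r \<omega> \<circ> X s t \<omega>)) \<and>
     \<comment> \<open>(ii) independent increments over consecutive intervals\<close>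
     (\<forall>(n::nat) (tt::nat \<Rightarrow> real). 0 \<le> tt 0 \<and> (\<forall>i<n. tt i \<le> tt (Suc i)) \<longrightarrow>
        prob_space.indep_sets M
          (\<lambda>i. sigma_sets (space M)
             {(\<lambda>\<omega>. X (tt i) (tt (Suc i)) \<omega> y) -` B \<inter> space M | y B. B \<in> sets borel})
          {..<n}) \<and>
     \<comment> \<open>(iii) stationarity in law\<close>
     (\<forall>s t. 0 \<le> s \<and> s \<le> t \<longrightarrow>
        distr M (Pi\<^sub>M UNIV (\<lambda>_. borel)) (X s t) = distr M (Pi\<^sub>M UNIV (\<lambda>_. borel)) (X 0 (t - s))) \<and>
     \<comment> \<open>(iv) X_{0,h} \<rightarrow> Id in probability (J1 = locally uniform, since Id is continuous)\<close>
     (\<forall>N>0. \<forall>\<epsilon>>0.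
        ((\<lambda>h. measure M {\<omega>\<in>space M. \<exists>x. \<bar>x\<bar> \<le> N \<and> \<bar>X 0 h \<omega> x - x\<bar> > \<epsilon>}) \<longlongrightarrow> 0)
          (at_right 0)) \<and>
     \<comment> \<open>(v) the martingale parts are Wiener processes\<close>
     (\<forall>x s. 0 \<le> s \<longrightarrow>
        wiener_from M (flow_filtration M X s) s
          (\<lambda>t \<omega>. X s t \<omega> x - x - (LBINT r=s..t. a (X s r \<omega> x)))) \<and>
     \<comment> \<open>(vi) joint quadratic covariation\<close>
     (\<forall>x y s. 0 \<le> s \<longrightarrow>
        martingale_from M (flow_filtration M X s) s
          (\<lambda>t \<omega>. (X s t \<omega> x - x - (LBINT r=s..t. a (X s r \<omega> x))) *
                 (X s t \<omega> y - y - (LBINT r=s..t. a (X s r \<omega> y)))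
                 - (LBINT r=s..t. \<phi> (X s r \<omega> x - X s r \<omega> y))))"

end

theory Submission
  imports Defs
begin
lemma LBINT_eq_if:
  fixes f :: "real \<Rightarrow> real"
  assumes "s \<le> t"
  shows "(LBINT r=s..t. f r) = (if set_integrable lborel {s..t} f then integral {s..t} f else 0)"
proof (cases "set_integrable lborel {s..t} f")
  case True
  then show ?thesis using assms
    by (simp add: interval_integral_Icc set_borel_integral_eq_integral)
next
  case False
  then show ?thesis using assms
    by (simp add: interval_integral_Icc set_lebesgue_integral_def set_integrable_def not_integrable_integral_eq)
qed
lemma bootstrap:
  fixes f :: "real \<Rightarrow> real" and u v A C :: real
  assumes uv: "u \<le> v" and fi: "f integrable_on {u..v}"
    and bnd: "\<And>\<tau>. \<tau> \<in> {u..v} \<Longrightarrow> \<bar>f \<tau>\<bar> \<le> A + C * \<bar>integral {u..\<tau>} f\<bar>"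
    and C: "0 \<le> C" "C * (v - u) \<le> 1/2" and A: "0 \<le> A"
  shows "\<forall>\<tau>\<in>{u..v}. \<bar>integral {u..\<tau>} f\<bar> \<le> 2 * (v - u) * A"
proof -
  have cont: "continuous_on {u..v} (\<lambda>\<tau>. \<bar>integral {u..\<tau>} f\<bar>)"
    by (intro continuous_intros indefinite_integral_continuous_1 fi)
  obtain t0 where t0: "t0 \<in> {u..v}" and mx: "\<And>\<tau>. \<tau>\<in>{u..v} \<Longrightarrow> \<bar>integral {u..\<tau>} f\<bar> \<le> \<bar>integral {u..t0} f\<bar>"
    using continuous_attains_sup[OF compact_Icc _ cont] uv by auto
  define m where "m = \<bar>integral {u..t0} f\<bar>"
  have m0: "0 \<le> m" by (simp add: m_def)
  have fi0: "f integrable_on {u..t0}"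
    using integrable_subinterval_real[OF fi] t0 by auto
  have "norm (integral {u..t0} f) \<le> (A + C * m) * Henstock_Kurzweil_Integration.content (cbox u t0)"
  proof (rule has_integral_bound)
    show "0 \<le> A + C * m" using A C m0 by simp
    show "(f has_integral integral {u..t0} f) (cbox u t0)"
      using fi0 by (simp add: has_integral_integral)
    fix x assume "x \<in> cbox u t0"
    then have "x \<in> {u..v}" using t0 by auto
    then show "norm (f x) \<le> A + C * m"
      using bnd[of x] mx[of x] C m_def by (smt (verit) mult_left_mono real_norm_def)
  qed
  then have "m \<le> (A + C * m) * (t0 - u)" using t0 by (simp add: m_def)
  also have "\<dots> \<le> (A + C * m) * (v - u)"
    using t0 A C m0 by (intro mult_left_mono) auto
  also have "\<dots> = A * (v - u) + m * (C * (v - u))" by (simp add: algebra_simps)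
  also have "\<dots> \<le> A * (v - u) + m * (1/2)"
    using C m0 by (intro add_left_mono mult_left_mono) auto
  finally have "m \<le> 2 * (A * (v - u))" by linarith
  then have "m \<le> 2 * (v - u) * A" by (simp add: algebra_simps)
  then show ?thesis using mx m_def by force
qed
lemma clamp_cont:
  fixes h :: "real \<Rightarrow> real"
  assumes "s \<le> t" "continuous_on {s..t} h"
  shows "continuous_on UNIV (\<lambda>x. h (min t (max s x)))"
proof -
  have "continuous_on UNIV (\<lambda>x. min t (max s x))" by (intro continuous_intros)
  moreover have "(\<lambda>x. min t (max s x)) ` UNIV \<subseteq> {s..t}" using assms by auto
  ultimately show ?thesis
    using continuous_on_compose2[OF assms(2)] by blast
qed

lemma meas_clamp:
  fixes h a :: "real \<Rightarrow> real"
  assumes a: "a \<in> borel_measurable borel" and st: "s \<le> t" and h: "continuous_on {s..t} h"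
  shows "set_borel_measurable lborel {s..t} (\<lambda>r. a (h r))"
proof -
  let ?h = "\<lambda>x. h (min t (max s x))"
  have "?h \<in> borel_measurable borel"
    by (rule borel_measurable_continuous_onI[OF clamp_cont[OF st h]])
  then have m: "(\<lambda>x. a (?h x)) \<in> borel_measurable borel"
    using a by (rule measurable_compose)
  have "(\<lambda>x. indicator {s..t} x *\<^sub>R a (h x)) = (\<lambda>x. indicator {s..t} x *\<^sub>R a (?h x))"
    by (auto simp: indicator_def fun_eq_iff min_def max_def)
  moreover have "(\<lambda>x. indicator {s..t} x *\<^sub>R a (?h x)) \<in> borel_measurable borel"
    using m by measurable
  ultimately show ?thesis
    unfolding set_borel_measurable_def by simp
qed

lemma bnd_int:
  fixes f :: "real \<Rightarrow> real"
  assumes "set_borel_measurable lborel {s..t} f" "\<And>x. x \<in> {s..t} \<Longrightarrow> \<bar>f x\<bar> \<le> K"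
  shows "set_integrable lborel {s..t} f"
proof (rule set_integrable_bound[where f="\<lambda>_. K"])
  show "set_integrable lborel {s..t} (\<lambda>_. K)"
    by (rule borel_integrable_atLeastAtMost') (intro continuous_intros)
  show "set_borel_measurable lborel {s..t} f" by fact
  show "AE x in lborel. x \<in> {s..t} \<longrightarrow> norm (f x) \<le> norm K"
    using assms(2) by (auto intro!: AE_I2) (smt (verit) abs_ge_self)
qed

lemma set_borel_measurable_Un2:
  fixes f :: "real \<Rightarrow> real"
  assumes "set_borel_measurable lborel A f" "set_borel_measurable lborel B f" "A \<inter> B = {}"
  shows "set_borel_measurable lborel (A \<union> B) f"
proof -
  have "(\<lambda>x. indicator (A \<union> B) x *\<^sub>R f x) = (\<lambda>x. indicator A x *\<^sub>R f x + indicator B x *\<^sub>R f x)"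
    using assms(3) by (auto simp: indicator_def fun_eq_iff)
  then show ?thesis using assms unfolding set_borel_measurable_def by simp
qed

lemma set_borel_measurable_singleton:
  fixes f :: "real \<Rightarrow> real"
  shows "set_borel_measurable lborel {c} f"
proof -
  have "(\<lambda>x. indicator {c} x *\<^sub>R f x) = (\<lambda>x. indicator {c} x *\<^sub>R f c)"
    by (auto simp: indicator_def fun_eq_iff)
  then show ?thesis unfolding set_borel_measurable_def by simp
qed

lemma rep_J:
  fixes a W g :: "real \<Rightarrow> real"
  assumes g: "\<forall>t\<ge>s. g t = y + W t + (LBINT r=s..t. a (g r))"
    and J: "set_integrable lborel {s..t} (\<lambda>r. a (g r))" and st: "s \<le> t"
    and W: "continuous_on {s..} W"
  shows "\<forall>\<tau>\<in>{s..t}. g \<tau> = y + W \<tau> + integral {s..\<tau>} (\<lambda>r. a (g r))"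
    and "continuous_on {s..t} g" and "(\<lambda>r. a (g r)) integrable_on {s..t}"
proof -
  show rep: "\<forall>\<tau>\<in>{s..t}. g \<tau> = y + W \<tau> + integral {s..\<tau>} (\<lambda>r. a (g r))"
  proof
    fix \<tau> assume \<tau>: "\<tau> \<in> {s..t}"
    have "set_integrable lborel {s..\<tau>} (\<lambda>r. a (g r))"
      by (rule set_integrable_subset[OF J]) (use \<tau> in auto)
    then show "g \<tau> = y + W \<tau> + integral {s..\<tau>} (\<lambda>r. a (g r))"
      using g[rule_format, of \<tau>] \<tau> LBINT_eq_if[of s \<tau> "\<lambda>r. a (g r)"] by auto
  qed
  show fi: "(\<lambda>r. a (g r)) integrable_on {s..t}"
    using set_borel_integral_eq_integral(1)[OF J] .
  have "continuous_on {s..t} (\<lambda>\<tau>. y + W \<tau> + integral {s..\<tau>} (\<lambda>r. a (g r)))"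
    by (intro continuous_intros indefinite_integral_continuous_1 fi continuous_on_subset[OF W]) auto
  then show "continuous_on {s..t} g"
    using rep by (auto intro: continuous_on_cong[THEN iffD1, rotated -1])
qed
lemma det_global:
  fixes a W g :: "real \<Rightarrow> real" and s y C :: real
  assumes a: "a \<in> borel_measurable borel" and ag: "\<forall>z. \<bar>a z\<bar> \<le> C * (1 + \<bar>z\<bar>)"
    and W: "continuous_on {s..} W"
    and g: "\<forall>t\<ge>s. g t = y + W t + (LBINT r=s..t. a (g r))"
  shows "\<forall>t\<ge>s. set_integrable lborel {s..t} (\<lambda>r. a (g r))"
proof (rule ccontr)
  define f where "f = (\<lambda>r. a (g r))"
  define J where "J = (\<lambda>t. set_integrable lborel {s..t} f)"
  assume "\<not> (\<forall>t\<ge>s. set_integrable lborel {s..t} (\<lambda>r. a (g r)))"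
  then obtain t1 where t1: "s \<le> t1" "\<not> J t1" unfolding J_def f_def by auto
  have C0: "0 \<le> C" using ag[rule_format, of 0] abs_ge_zero[of "a 0"] by simp
  have Jsub: "J t'" if "J t" "s \<le> t'" "t' \<le> t" for t t'
    using that unfolding J_def by (auto intro: set_integrable_subset)
  have Js: "J s"
    unfolding J_def f_def
    by (rule bnd_int[where K="\<bar>a (g s)\<bar>"]) (auto intro: set_borel_measurable_singleton)
  define A where "A = {t. s \<le> t \<and> J t}"
  have sA: "s \<in> A" using Js by (simp add: A_def)
  have Abd: "\<And>t. t \<in> A \<Longrightarrow> t \<le> t1"
    using Jsub t1 by (force simp: A_def)
  define R where "R = Sup A"
  have bdd: "bdd_above A" using Abd by (auto simp: bdd_above_def)
  have sR: "s \<le> R" unfolding R_def by (rule cSup_upper[OF sA bdd])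
  have Rt1: "R \<le> t1" unfolding R_def using sA Abd by (intro cSup_least) auto
  have Jbelow: "J t" if "s \<le> t" "t < R" for t
  proof -
    have "t < Sup A" using that R_def by simp
    then obtain t' where "t' \<in> A" "t < t'" using less_cSupD[of A t] sA by auto
    then show ?thesis using Jsub[of t' t] that by (auto simp: A_def)
  qed
  have Wb: "\<exists>K. \<forall>\<tau>\<in>{s..t}. \<bar>W \<tau>\<bar> \<le> K" for t
  proof -
    have "compact (W ` {s..t})"
      by (rule compact_continuous_image[OF continuous_on_subset[OF W]]) auto
    then obtain K where "\<forall>x\<in>W ` {s..t}. norm x \<le> K"
      using compact_imp_bounded bounded_iff by metis
    then show ?thesis by auto
  qed
  obtain KW where KW: "\<And>\<tau>. \<tau> \<in> {s..t1} \<Longrightarrow> \<bar>W \<tau>\<bar> \<le> KW" using Wb by blast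
  have KW0: "0 \<le> KW" using KW[of s] t1(1) by force
  have JR: "J R"
  proof (cases "R = s")
    case True then show ?thesis using Js by simp
  next
    case False
    then have sR': "s < R" using sR by simp
    define u where "u = max s (R - 1 / (2 * (C + 1)))"
    have su: "s \<le> u" and uR: "u < R" using sR' C0 by (auto simp: u_def)
    have Cu: "C * (R - u) \<le> 1/2"
    proof -
      have "R - u \<le> 1 / (2 * (C + 1))" by (simp add: u_def)
      then have "C * (R - u) \<le> C * (1 / (2 * (C + 1)))" using C0 by (rule mult_left_mono)
      also have "\<dots> \<le> 1/2" using C0 by (simp add: field_simps)
      finally show ?thesis .
    qed
    have Ju: "J u" using Jbelow su uR by simp
    note repu = rep_J[OF g Ju[unfolded J_def f_def] su W]
    obtain KG where KG: "\<And>\<tau>. \<tau> \<in> {s..u} \<Longrightarrow> \<bar>g \<tau>\<bar> \<le> KG"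
    proof -
      have "compact (g ` {s..u})"
        by (rule compact_continuous_image[OF repu(2)]) auto
      then obtain K where "\<forall>x\<in>g ` {s..u}. norm x \<le> K"
        using compact_imp_bounded bounded_iff by metis
      then show ?thesis by (intro that[of K]) auto
    qed
    define Iu where "Iu = integral {s..u} f"
    define A0 where "A0 = C * (1 + \<bar>y\<bar> + KW + \<bar>Iu\<bar>)"
    have A00: "0 \<le> A0" using C0 KW0 by (simp add: A0_def)
    define B where "B = KG + \<bar>y\<bar> + KW + \<bar>Iu\<bar> + 2 * (R - u) * A0"
    have gB: "\<bar>g \<tau>\<bar> \<le> B" if "s \<le> \<tau>" "\<tau> < R" for \<tau>
    proof (cases "\<tau> \<le> u")
      case True
      have "0 \<le> 2 * (R - u) * A0" using A00 uR by simp
      moreover have "\<bar>g \<tau>\<bar> \<le> KG" using KG that True by auto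
      ultimately show ?thesis using KW0 abs_ge_zero[of y] abs_ge_zero[of Iu]
        unfolding B_def by linarith
    next
      case False
      then have u\<tau>: "u \<le> \<tau>" by simp
      have J\<tau>: "J \<tau>" using Jbelow that by simp
      note rep\<tau> = rep_J[OF g J\<tau>[unfolded J_def f_def] that(1) W]
      have fi: "f integrable_on {s..\<tau>}" using rep\<tau>(3) by (simp add: f_def)
      have fiu: "f integrable_on {u..\<tau>}"
        using integrable_subinterval_real[OF fi] su by auto
      have split: "integral {s..r} f = Iu + integral {u..r} f" if "r \<in> {u..\<tau>}" for r
      proof -
        have "f integrable_on {s..r}" using integrable_subinterval_real[OF fi] that by auto
        then show ?thesis using Henstock_Kurzweil_Integration.integral_combine[where a=s and c=u and b=r and f=f] su that by (simp add: Iu_def)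
      qed
      have R\<tau>R: "R \<le> t1" using Rt1 .
      have "\<forall>r\<in>{u..\<tau>}. \<bar>integral {u..r} f\<bar> \<le> 2 * (\<tau> - u) * A0"
      proof (rule bootstrap[OF u\<tau> fiu _ C0])
        fix r assume r: "r \<in> {u..\<tau>}"
        have "g r = y + W r + Iu + integral {u..r} f"
          using rep\<tau>(1) r su split[OF r] by (auto simp: f_def)
        moreover have "\<bar>W r\<bar> \<le> KW" using KW r su that Rt1 by auto
        ultimately have "\<bar>g r\<bar> \<le> \<bar>y\<bar> + KW + \<bar>Iu\<bar> + \<bar>integral {u..r} f\<bar>" by linarith
        then have "C * (1 + \<bar>g r\<bar>) \<le> C * (1 + (\<bar>y\<bar> + KW + \<bar>Iu\<bar> + \<bar>integral {u..r} f\<bar>))"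
          using C0 by (intro mult_left_mono) auto
        then show "\<bar>f r\<bar> \<le> A0 + C * \<bar>integral {u..r} f\<bar>"
          using ag[rule_format, of "g r"] by (simp add: f_def A0_def algebra_simps)
      next
        have "C * (\<tau> - u) \<le> C * (R - u)" using that C0 by (intro mult_left_mono) auto
        then show "C * (\<tau> - u) \<le> 1/2" using Cu by linarith
      qed (use A00 in auto)
      then have "\<bar>integral {u..\<tau>} f\<bar> \<le> 2 * (\<tau> - u) * A0" using u\<tau> by auto
      also have "\<dots> \<le> 2 * (R - u) * A0" using that A00 by (intro mult_right_mono) auto
      finally have "\<bar>integral {u..\<tau>} f\<bar> \<le> 2 * (R - u) * A0" .
      moreover have "g \<tau> = y + W \<tau> + Iu + integral {u..\<tau>} f"
        using rep\<tau>(1) that split[of \<tau>] u\<tau> by (auto simp: f_def)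
      moreover have "\<bar>W \<tau>\<bar> \<le> KW" using KW that Rt1 by auto
      moreover have "0 \<le> KG" using KG[of s] su by auto
      ultimately show ?thesis by (simp add: B_def)
    qed
    have mlt: "set_borel_measurable lborel {s..<R} f"
    proof -
      define tn where "tn = (\<lambda>n::nat. R - (R - s) / (real n + 2))"
      have tn: "s \<le> tn n" "tn n < R" for n
      proof -
        have "(R - s) / (real n + 2) \<le> (R - s) / 1" using sR' by (intro divide_left_mono) auto
        moreover have "0 < (R - s) / (real n + 2)" using sR' by simp
        ultimately show "s \<le> tn n" "tn n < R" by (auto simp: tn_def)
      qed
      have m: "(\<lambda>x. indicator {s..tn n} x *\<^sub>R f x) \<in> borel_measurable lborel" for n
      proof -
        have "J (tn n)" using Jbelow tn by blast
        note r = rep_J[OF g this[unfolded J_def f_def] tn(1) W]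
        show ?thesis using meas_clamp[OF a tn(1) r(2)] by (simp add: set_borel_measurable_def f_def)
      qed
      have lim: "(\<lambda>n. indicator {s..tn n} x *\<^sub>R f x) \<longlonglongrightarrow> indicator {s..<R} x *\<^sub>R f x" for x
      proof (cases "s \<le> x \<and> x < R")
        case True
        obtain N :: nat where N: "(R - s) / (R - x) < real N"
          using reals_Archimedean2 by blast
        have "eventually (\<lambda>n. (R - s) / (real n + 2) < R - x) sequentially"
          unfolding eventually_sequentially
        proof (intro exI allI impI)
          fix n assume "N \<le> n"
          then have "(R - s) / (R - x) < real n + 2" using N by linarith
          then show "(R - s) / (real n + 2) < R - x"
            using True by (simp add: field_simps)
        qed
        then have "eventually (\<lambda>n. indicator {s..tn n} x *\<^sub>R f x = indicator {s..<R} x *\<^sub>R f x) sequentially"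
          by eventually_elim (use True in \<open>auto simp: tn_def indicator_def\<close>)
        then show ?thesis by (rule tendsto_eventually)
      next
        case False
        then have eq: "indicator {s..tn n} x *\<^sub>R f x = indicator {s..<R} x *\<^sub>R f x" for n
          using tn[of n] by (auto simp: indicator_def)
        show ?thesis by (simp only: eq tendsto_const)
      qed
      show ?thesis unfolding set_borel_measurable_def
        by (rule borel_measurable_LIMSEQ_real[OF lim m])
    qed
    have meas: "set_borel_measurable lborel {s..R} f"
    proof -
      have "{s..R} = {s..<R} \<union> {R}" using sR by auto
      then show ?thesis using set_borel_measurable_Un2[OF mlt set_borel_measurable_singleton[of R f]]
        by auto
    qed
    show "J R" unfolding J_def
    proof (rule bnd_int[OF meas])
      fix x assume x: "x \<in> {s..R}"
      show "\<bar>f x\<bar> \<le> max (C * (1 + B)) \<bar>f R\<bar>"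
      proof (cases "x = R")
        case False
        then have "\<bar>g x\<bar> \<le> B" using gB x by auto
        then have "C * (1 + \<bar>g x\<bar>) \<le> C * (1 + B)" using C0 by (intro mult_left_mono) auto
        then have "\<bar>f x\<bar> \<le> C * (1 + B)"
          using ag[rule_format, of "g x"] unfolding f_def by linarith
        then show ?thesis by simp
      qed simp
    qed
  qed
  have RA: "R \<in> A" using JR sR by (simp add: A_def)
  have Rlt: "R < t1" using Rt1 JR t1 by (cases "R = t1") auto
  have notJ: "\<not> J t" if "R < t" for t
  proof
    assume "J t"
    then have "t \<in> A" using that sR by (simp add: A_def)
    then have "t \<le> R" unfolding R_def by (rule cSup_upper[OF _ bdd])
    then show False using that by simp
  qed
  have gW: "g t = y + W t" if "R < t" "t \<le> t1" for t
    using g[rule_format, of t] notJ[OF that(1)] LBINT_eq_if[of s t f] that sR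
    by (auto simp: J_def f_def)
  have int2: "set_integrable lborel {R<..t1} f"
  proof -
    let ?h = "\<lambda>x. a (y + W (min t1 (max s x)))"
    have "continuous_on UNIV (\<lambda>x. W (min t1 (max s x)))"
      using clamp_cont[OF t1(1) continuous_on_subset[OF W]] by auto
    then have "continuous_on {R..t1} (\<lambda>x. y + W (min t1 (max s x)))"
      by (intro continuous_intros) (auto intro: continuous_on_subset)
    then have "set_borel_measurable lborel {R..t1} (\<lambda>x. a (y + W (min t1 (max s x))))"
      using meas_clamp[OF a Rt1, of "\<lambda>x. y + W (min t1 (max s x))"] by simp
    then have "set_integrable lborel {R..t1} ?h"
    proof (rule bnd_int)
      fix x assume x: "x \<in> {R..t1}"
      have "\<bar>W (min t1 (max s x))\<bar> \<le> KW" using KW t1 by auto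
      then have "1 + \<bar>y + W (min t1 (max s x))\<bar> \<le> 1 + \<bar>y\<bar> + KW" by linarith
      then have "C * (1 + \<bar>y + W (min t1 (max s x))\<bar>) \<le> C * (1 + \<bar>y\<bar> + KW)"
        using C0 by (intro mult_left_mono) auto
      then show "\<bar>?h x\<bar> \<le> C * (1 + \<bar>y\<bar> + KW)"
        using ag[rule_format, of "y + W (min t1 (max s x))"] by linarith
    qed
    then have "set_integrable lborel {R<..t1} ?h"
      by (rule set_integrable_subset) auto
    moreover have "\<And>x. x \<in> {R<..t1} \<Longrightarrow> ?h x = f x"
      using gW sR by (auto simp: f_def min_def max_def)
    ultimately show ?thesis using set_integrable_cong[of lborel lborel "{R<..t1}" "{R<..t1}" ?h f] by simp
  qed
  have "J t1" unfolding J_def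
  proof -
    have "{s..t1} = {s..R} \<union> {R<..t1}" using sR Rt1 by auto
    moreover have "set_integrable lborel ({s..R} \<union> {R<..t1}) f"
      using JR int2 by (intro set_integrable_Un) (auto simp: J_def)
    ultimately show "set_integrable lborel {s..t1} f" by simp
  qed
  then show False using t1 by simp
qed
lemma det_path:
  fixes a W g :: "real \<Rightarrow> real" and s y C :: real
  assumes a: "a \<in> borel_measurable borel" and ag: "\<forall>z. \<bar>a z\<bar> \<le> C * (1 + \<bar>z\<bar>)"
    and W: "continuous_on {s..} W"
    and g: "\<forall>t\<ge>s. g t = y + W t + (LBINT r=s..t. a (g r))"
  shows "\<forall>t\<ge>s. continuous_on {s..t} g"
  using det_global[OF a ag W g] rep_J(2)[OF g _ _ W] by blast

lemma det_local:
  fixes a W g :: "real \<Rightarrow> real" and s y C :: real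
  assumes a: "a \<in> borel_measurable borel" and ag: "\<forall>z. \<bar>a z\<bar> \<le> C * (1 + \<bar>z\<bar>)"
    and W: "continuous_on {s..} W"
    and g: "\<forall>t\<ge>s. g t = y + W t + (LBINT r=s..t. a (g r))"
    and H: "0 \<le> H" "C * H \<le> 1/2" and y: "\<bar>y\<bar> \<le> Mb"
    and Wb: "\<forall>r\<in>{s..s+H}. \<bar>W r\<bar> \<le> \<eta>"
  shows "\<forall>r\<in>{s..s+H}. \<bar>g r - y\<bar> \<le> \<eta> + 2 * H * (C * (1 + Mb + \<eta>))"
proof -
  define f where "f = (\<lambda>r. a (g r))"
  have C0: "0 \<le> C" using ag[rule_format, of 0] abs_ge_zero[of "a 0"] by simp
  have eta0: "0 \<le> \<eta>" using Wb H by force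
  have Mb0: "0 \<le> Mb" using y by linarith
  have J: "set_integrable lborel {s..s+H} f"
    using det_global[OF a ag W g] H by (auto simp: f_def)
  note rep = rep_J[OF g J[unfolded f_def] _ W]
  have fi: "f integrable_on {s..s+H}" using rep(3) H by (simp add: f_def)
  define A0 where "A0 = C * (1 + Mb + \<eta>)"
  have A00: "0 \<le> A0" using C0 eta0 Mb0 by (simp add: A0_def)
  have "\<forall>r\<in>{s..s+H}. \<bar>integral {s..r} f\<bar> \<le> 2 * (s + H - s) * A0"
  proof (rule bootstrap[OF _ fi _ C0])
    fix r assume r: "r \<in> {s..s+H}"
    have "g r = y + W r + integral {s..r} f" using rep(1) r H by (auto simp: f_def)
    then have "\<bar>g r\<bar> \<le> Mb + \<eta> + \<bar>integral {s..r} f\<bar>" using Wb r y by fastforce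
    then have "C * (1 + \<bar>g r\<bar>) \<le> C * (1 + (Mb + \<eta> + \<bar>integral {s..r} f\<bar>))"
      using C0 by (intro mult_left_mono) auto
    then show "\<bar>f r\<bar> \<le> A0 + C * \<bar>integral {s..r} f\<bar>"
      using ag[rule_format, of "g r"] by (simp add: f_def A0_def algebra_simps)
  qed (use H A00 in auto)
  then show ?thesis
  proof (intro ballI)
    fix r assume r: "r \<in> {s..s+H}"
    assume b: "\<forall>r\<in>{s..s+H}. \<bar>integral {s..r} f\<bar> \<le> 2 * (s + H - s) * A0"
    have "g r - y = W r + integral {s..r} f" using rep(1) r H by (auto simp: f_def)
    then show "\<bar>g r - y\<bar> \<le> \<eta> + 2 * H * (C * (1 + Mb + \<eta>))"
      using b[rule_format, OF r] Wb[rule_format, OF r] by (simp add: A0_def)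
  qed
qed


lemma normal_tail4:
  fixes Z :: "'a \<Rightarrow> real"
  assumes P: "prob_space M" and D: "distributed M lborel Z (normal_density 0 \<sigma>)"
    and \<sigma>: "0 < \<sigma>" and c: "0 < c"
  shows "measure M {\<omega>\<in>space M. c \<le> \<bar>Z \<omega>\<bar>} \<le> 3 * \<sigma>^4 / c^4"
proof -
  interpret prob_space M by fact
  have mom: "has_bochner_integral lborel (\<lambda>x. normal_density 0 \<sigma> x * (x - 0)^(2*2)) (fact (2*2) / ((2/\<sigma>\<^sup>2)^2 * fact 2))"
    by (rule normal_moment_even[OF \<sigma>])
  have val: "(fact (2*2) / ((2/\<sigma>\<^sup>2)^2 * fact 2) :: real) = 3 * \<sigma>^4"
    using \<sigma> by (simp add: fact_numeral field_simps power2_eq_square numeral_eq_Suc)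
  have mom': "has_bochner_integral lborel (\<lambda>x. normal_density 0 \<sigma> x * x^4) (3 * \<sigma>^4)"
    using mom val by simp
  have int_lb: "integrable lborel (\<lambda>x. normal_density 0 \<sigma> x * x^4)"
    using mom' by (simp add: has_bochner_integral_iff)
  have intM: "integrable M (\<lambda>\<omega>. (Z \<omega>)^4)"
    using distributed_integrable[OF D, of "\<lambda>x. x^4"] int_lb by simp
  have EZ: "(\<integral>\<omega>. (Z \<omega>)^4 \<partial>M) = 3 * \<sigma>^4"
    using distributed_integral[OF D, of "\<lambda>x. x^4"] mom' by (simp add: has_bochner_integral_iff)
  have eq: "{\<omega>\<in>space M. c \<le> \<bar>Z \<omega>\<bar>} = {\<omega>\<in>space M. c^4 \<le> (Z \<omega>)^4}"
  proof -
    have "c \<le> \<bar>z\<bar> \<longleftrightarrow> c^4 \<le> \<bar>z\<bar>^4" for z :: real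
      using c by (intro power_mono_iff[symmetric]) auto
    then have "c \<le> \<bar>z\<bar> \<longleftrightarrow> c^4 \<le> z^4" for z :: real
      by (simp add: power_even_abs_numeral)
    then show ?thesis by auto
  qed
  have "measure M {\<omega>\<in>space M. c^4 \<le> (Z \<omega>)^4} \<le> (\<integral>\<omega>. (Z \<omega>)^4 \<partial>M) / c^4"
    using intM c by (intro integral_Markov_inequality_measure[where A="space M"]) auto
  then show ?thesis using eq EZ by simp
qed
lemma ottaviani:
  fixes S :: "nat \<Rightarrow> 'a \<Rightarrow> real" and G :: "nat \<Rightarrow> 'a measure" and a c :: real and n :: nat
  assumes P: "prob_space M"
    and G: "\<And>k. k \<le> n \<Longrightarrow> sets (G k) \<subseteq> sets M \<and> space (G k) = space M"
    and Smeas: "\<And>j k. j \<le> k \<Longrightarrow> k \<le> n \<Longrightarrow> S j \<in> borel_measurable (G k)"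
    and indep: "\<And>k A. k \<le> n \<Longrightarrow> A \<in> sets (G k) \<Longrightarrow>
        measure M (A \<inter> {\<omega>\<in>space M. \<bar>S n \<omega> - S k \<omega>\<bar> \<le> a}) =
        measure M A * measure M {\<omega>\<in>space M. \<bar>S n \<omega> - S k \<omega>\<bar> \<le> a}"
    and cb: "\<And>k. k \<le> n \<Longrightarrow> measure M {\<omega>\<in>space M. a < \<bar>S n \<omega> - S k \<omega>\<bar>} \<le> c"
    and c1: "c < 1"
  shows "measure M {\<omega>\<in>space M. \<exists>k\<le>n. 2*a < \<bar>S k \<omega>\<bar>} \<le> measure M {\<omega>\<in>space M. a < \<bar>S n \<omega>\<bar>} / (1 - c)"
proof -
  interpret prob_space M by fact
  define Ak where "Ak = (\<lambda>k. {\<omega>\<in>space M. 2*a < \<bar>S k \<omega>\<bar> \<and> (\<forall>j\<in>{..<k}. \<bar>S j \<omega>\<bar> \<le> 2*a)})"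
  define B where "B = (\<lambda>k. {\<omega>\<in>space M. \<bar>S n \<omega> - S k \<omega>\<bar> \<le> a})"
  have SM: "S j \<in> borel_measurable M" if "j \<le> n" for j
  proof -
    have "S j \<in> borel_measurable (G n)" using Smeas that by simp
    then show ?thesis using G[of n] by (auto simp: measurable_def)
  qed
  have AkG: "Ak k \<in> sets (G k)" if "k \<le> n" for k
  proof -
    have sp: "space (G k) = space M" using G that by simp
    have m: "S j \<in> borel_measurable (G k)" if "j \<le> k" for j using Smeas that \<open>k \<le> n\<close> by simp
    have "{\<omega>\<in>space (G k). 2*a < \<bar>S k \<omega>\<bar>} \<in> sets (G k)"
      using m[of k] by measurable
    moreover have "{\<omega>\<in>space (G k). \<forall>j\<in>{..<k}. \<bar>S j \<omega>\<bar> \<le> 2*a} \<in> sets (G k)"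
    proof (rule sets.sets_Collect_countable_All')
      fix j assume "j \<in> {..<k}"
      then have [measurable]: "S j \<in> borel_measurable (G k)" using m[of j] by simp
      show "{\<omega>\<in>space (G k). \<bar>S j \<omega>\<bar> \<le> 2*a} \<in> sets (G k)"
        by measurable
    qed auto
    ultimately have "{\<omega>\<in>space (G k). 2*a < \<bar>S k \<omega>\<bar>} \<inter> {\<omega>\<in>space (G k). \<forall>j\<in>{..<k}. \<bar>S j \<omega>\<bar> \<le> 2*a} \<in> sets (G k)"
      by blast
    moreover have "{\<omega>\<in>space (G k). 2*a < \<bar>S k \<omega>\<bar>} \<inter> {\<omega>\<in>space (G k). \<forall>j\<in>{..<k}. \<bar>S j \<omega>\<bar> \<le> 2*a} = Ak k"
      by (auto simp: Ak_def sp)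
    ultimately show ?thesis by simp
  qed
  have AkM: "Ak k \<in> events" if "k \<le> n" for k using AkG[OF that] G[OF that] by auto
  have BM: "B k \<in> events" if "k \<le> n" for k
    unfolding B_def using SM[of n] SM[of k] that by measurable
  have disj: "disjoint_family_on Ak {..n}"
    unfolding disjoint_family_on_def
  proof (intro ballI impI)
    fix k l assume "k \<in> {..n}" "l \<in> {..n}" "k \<noteq> l"
    then show "Ak k \<inter> Ak l = {}"
    proof (cases "k < l")
      case True then show ?thesis by (force simp: Ak_def)
    next
      case False then have "l < k" using \<open>k \<noteq> l\<close> by simp
      then show ?thesis by (force simp: Ak_def)
    qed
  qed
  have Un: "{\<omega>\<in>space M. \<exists>k\<le>n. 2*a < \<bar>S k \<omega>\<bar>} = (\<Union>k\<in>{..n}. Ak k)"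
  proof (intro equalityI subsetI)
    fix \<omega> assume "\<omega> \<in> {\<omega>\<in>space M. \<exists>k\<le>n. 2*a < \<bar>S k \<omega>\<bar>}"
    then obtain k where k: "k \<le> n" "2*a < \<bar>S k \<omega>\<bar>" and sp: "\<omega> \<in> space M" by auto
    define k0 where "k0 = (LEAST k. 2*a < \<bar>S k \<omega>\<bar>)"
    have k0: "2*a < \<bar>S k0 \<omega>\<bar>" unfolding k0_def by (rule LeastI[of _ k]) (rule k(2))
    have k0k: "k0 \<le> k" unfolding k0_def by (rule Least_le) (rule k(2))
    have "\<bar>S j \<omega>\<bar> \<le> 2*a" if "j < k0" for j
      using not_less_Least[where P="\<lambda>k. 2*a < \<bar>S k \<omega>\<bar>", OF that[unfolded k0_def]] by simp
    then have "\<forall>j\<in>{..<k0}. \<bar>S j \<omega>\<bar> \<le> 2*a" by simp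
    then show "\<omega> \<in> (\<Union>k\<in>{..n}. Ak k)" using k0 k0k k sp by (auto simp: Ak_def)
  qed (auto simp: Ak_def)
  have sub: "(\<Union>k\<in>{..n}. Ak k \<inter> B k) \<subseteq> {\<omega>\<in>space M. a < \<bar>S n \<omega>\<bar>}"
    by (auto simp: Ak_def B_def)
  have disj2: "disjoint_family_on (\<lambda>k. Ak k \<inter> B k) {..n}"
    using disj unfolding disjoint_family_on_def by blast
  have "(\<Sum>k\<in>{..n}. prob (Ak k) * (1 - c)) \<le> (\<Sum>k\<in>{..n}. prob (Ak k \<inter> B k))"
  proof (rule sum_mono)
    fix k assume k: "k \<in> {..n}"
    have "prob (B k) = 1 - prob (space M - B k)" using prob_compl[OF BM] k by simp
    also have "space M - B k = {\<omega>\<in>space M. a < \<bar>S n \<omega> - S k \<omega>\<bar>}" by (auto simp: B_def)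
    finally have "1 - c \<le> prob (B k)" using cb[of k] k by simp
    then have "prob (Ak k) * (1 - c) \<le> prob (Ak k) * prob (B k)" by (intro mult_left_mono) auto
    also have "\<dots> = prob (Ak k \<inter> B k)" using indep[OF _ AkG, of k] k by (simp add: B_def)
    finally show "prob (Ak k) * (1 - c) \<le> prob (Ak k \<inter> B k)" .
  qed
  also have "\<dots> = prob (\<Union>k\<in>{..n}. Ak k \<inter> B k)"
    using AkM BM by (intro finite_measure_finite_Union[symmetric] disj2) auto
  also have "\<dots> \<le> prob {\<omega>\<in>space M. a < \<bar>S n \<omega>\<bar>}"
    using sub SM[of n] by (intro finite_measure_mono) (auto, measurable)
  moreover have "prob (\<Union>k\<in>{..n}. Ak k) = (\<Sum>k\<in>{..n}. prob (Ak k))"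
    using AkM by (intro finite_measure_finite_Union disj) auto
  ultimately have "prob (\<Union>k\<in>{..n}. Ak k) * (1 - c) \<le> prob {\<omega>\<in>space M. a < \<bar>S n \<omega>\<bar>}"
    by (simp add: sum_distrib_right)
  then show ?thesis using Un c1 by (simp add: field_simps)
qed
lemma dyadic_closed:
  fixes w :: "real \<Rightarrow> real"
  assumes cont: "continuous_on {s..} w" and H: "0 < H"
    and bd: "\<And>m k. k \<le> 2^m \<Longrightarrow> \<bar>w (s + H * real k / 2^m)\<bar> \<le> b"
  shows "\<forall>r\<in>{s..s+H}. \<bar>w r\<bar> \<le> b"
proof
  fix r assume r: "r \<in> {s..s+H}"
  define x where "x = (r - s) / H"
  have x: "0 \<le> x" "x \<le> 1" using r H by (auto simp: x_def field_simps)
  define k where "k = (\<lambda>m::nat. nat \<lfloor>x * 2^m\<rfloor>)"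
  define rm where "rm = (\<lambda>m. s + H * real (k m) / 2^m)"
  have kr: "real (k m) = of_int \<lfloor>x * 2^m\<rfloor>" for m using x by (simp add: k_def)
  have k1: "real (k m) \<le> x * 2^m" "x * 2^m < real (k m) + 1" for m
    using kr[of m] by linarith+
  have k2: "k m \<le> 2^m" for m
  proof -
    have "x * 2^m \<le> 1 * 2^m" using x by (intro mult_right_mono) auto
    then have "real (k m) \<le> 2^m" using k1(1)[of m] by linarith
    then show ?thesis by (metis of_nat_le_iff of_nat_numeral of_nat_power)
  qed
  have rm_s: "s \<le> rm m" for m using H by (simp add: rm_def)
  have dist: "\<bar>rm m - r\<bar> \<le> H / 2^m" for m
  proof -
    have "r = s + H * x" using H by (simp add: x_def)
    then have rr: "r - rm m = H * (x - real (k m) / 2^m)" by (simp add: rm_def algebra_simps)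
    have e: "x - real (k m) / 2^m = (x * 2^m - real (k m)) / 2^m" by (simp add: field_simps)
    have e1: "0 \<le> (x * 2^m - real (k m)) / 2^m" using k1[of m] by simp
    have e2: "(x * 2^m - real (k m)) / 2^m \<le> 1 / 2^m"
      using k1[of m] by (intro divide_right_mono) auto
    from e e1 e2 have b: "0 \<le> x - real (k m) / 2^m" "x - real (k m) / 2^m \<le> 1 / 2^m" by simp_all
    have "\<bar>rm m - r\<bar> = \<bar>H * (x - real (k m) / 2^m)\<bar>" using rr by (simp add: abs_minus_commute)
    also have "\<dots> = H * (x - real (k m) / 2^m)" using b H by (simp add: abs_mult)
    also have "\<dots> \<le> H * (1 / 2^m)" using b H by (intro mult_left_mono) auto
    finally show ?thesis by simp
  qed
  have lim0: "(\<lambda>m. H / 2^m) \<longlonglongrightarrow> 0"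
    by (rule LIMSEQ_divide_realpow_zero) simp
  have "eventually (\<lambda>m. norm (rm m - r) \<le> H / 2^m) sequentially"
    using dist by (simp add: always_eventually)
  then have "(\<lambda>m. rm m - r) \<longlonglongrightarrow> 0"
    using lim0 by (rule Lim_null_comparison)
  then have rmr: "rm \<longlonglongrightarrow> r" by (simp add: LIM_zero_iff)
  have "((\<lambda>m. w (rm m)) \<longlonglongrightarrow> w r)"
    using continuous_on_tendsto_compose[OF cont rmr] r rm_s by (auto simp: o_def)
  then have "(\<lambda>m. \<bar>w (rm m)\<bar>) \<longlonglongrightarrow> \<bar>w r\<bar>" by (rule tendsto_rabs)
  moreover have "\<bar>w (rm m)\<bar> \<le> b" for m using bd[OF k2[of m]] by (simp add: rm_def)
  ultimately show "\<bar>w r\<bar> \<le> b" by (intro Lim_bounded[where M=0]) auto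
qed
lemma meas_sub:
  assumes "f \<in> borel_measurable A" "sets A \<subseteq> sets B" "space A = space B"
  shows "f \<in> borel_measurable B"
  using assms by (auto simp: measurable_def)

lemma wiener_sup:
  fixes W :: "real \<Rightarrow> 'a \<Rightarrow> real" and F :: "real \<Rightarrow> 'a measure"
  assumes P: "prob_space M" and Wf: "wiener_from M F s W"
    and Fsp: "\<And>t. space (F t) = space M \<and> sets (F t) \<subseteq> sets M"
    and Fmono: "\<And>u t. u \<le> t \<Longrightarrow> sets (F u) \<subseteq> sets (F t)"
    and H: "0 < H" and a: "0 < a" and c0: "3 * H^2 / a^4 \<le> 1/2"
  shows "\<exists>Z\<in>sets M. measure M Z \<le> 6 * H^2 / a^4 \<and>
     (\<forall>\<omega>\<in>space M. \<omega> \<notin> Z \<longrightarrow> continuous_on {s..} (\<lambda>t. W t \<omega>) \<longrightarrow> (\<forall>r\<in>{s..s+H}. \<bar>W r \<omega>\<bar> \<le> 2*a))"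
proof -
  interpret prob_space M by fact
  have Wm: "\<And>t. s \<le> t \<Longrightarrow> W t \<in> borel_measurable (F t)"
    and W0: "\<And>\<omega>. \<omega> \<in> space M \<Longrightarrow> W s \<omega> = 0"
    and Wd: "\<And>u t. s \<le> u \<Longrightarrow> u < t \<Longrightarrow>
        distributed M lborel (\<lambda>\<omega>. W t \<omega> - W u \<omega>) (normal_density 0 (sqrt (t - u)))"
    and Wi: "\<And>u t. s \<le> u \<Longrightarrow> u < t \<Longrightarrow>
        indep_set (sets (F u)) {(\<lambda>\<omega>. W t \<omega> - W u \<omega>) -` B \<inter> space M | B. B \<in> sets borel}"
    using Wf unfolding wiener_from_def by blast+
  have WM: "W t \<in> borel_measurable M" if "s \<le> t" for t
    using meas_sub[OF Wm[OF that]] Fsp[of t] by auto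
  define c where "c = 3 * H^2 / a^4"
  have c0': "c \<le> 1/2" using c0 by (simp add: c_def)
  have cpos: "0 \<le> c" by (simp add: c_def)
  have tail: "measure M {\<omega>\<in>space M. a < \<bar>W t \<omega> - W u \<omega>\<bar>} \<le> c" if "s \<le> u" "u \<le> t" "t \<le> s + H" for u t
  proof (cases "u = t")
    case True
    then have eq: "{\<omega>\<in>space M. a < \<bar>W t \<omega> - W u \<omega>\<bar>} = {}" using a by auto
    show ?thesis using cpos by (simp only: eq measure_empty)
  next
    case False
    then have ut: "u < t" using that by simp
    have "measure M {\<omega>\<in>space M. a < \<bar>W t \<omega> - W u \<omega>\<bar>} \<le> measure M {\<omega>\<in>space M. a \<le> \<bar>W t \<omega> - W u \<omega>\<bar>}"
      using WM[of t] WM[of u] that by (intro finite_measure_mono) (auto, measurable)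
    also have "\<dots> \<le> 3 * (sqrt (t - u))^4 / a^4"
      by (rule normal_tail4[OF P Wd[OF that(1) ut]]) (use ut a in auto)
    also have "(sqrt (t - u))^4 = (t - u)^2"
    proof -
      have "(sqrt (t - u))^4 = ((sqrt (t - u))^2)^2" by (simp flip: power_mult)
      also have "\<dots> = (t - u)^2" using ut by simp
      finally show ?thesis .
    qed
    also have "3 * (t - u)^2 / a^4 \<le> c"
    proof -
      have "(t - u)^2 \<le> H^2" using that ut by (intro power_mono) auto
      then show ?thesis unfolding c_def using a by (intro divide_right_mono) auto
    qed
    finally show ?thesis .
  qed
  define u where "u = (\<lambda>m k. s + H * real k / 2^m)"
  have u_s: "s \<le> u m k" for m k using H by (simp add: u_def)
  have u_le: "u m k \<le> s + H" if "k \<le> 2^m" for m k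
  proof -
    have "real k / 2^m \<le> 1" using that by (simp add: field_simps)
    then have "H * (real k / 2^m) \<le> H * 1" using H by (intro mult_left_mono) auto
    then show ?thesis by (simp add: u_def)
  qed
  have u_mono: "u m j \<le> u m k" if "j \<le> k" for m j k
    using that H by (simp add: u_def divide_right_mono mult_left_mono)
  have u_top: "u m (2^m) = s + H" for m by (simp add: u_def)
  define Zm where "Zm = (\<lambda>m. {\<omega>\<in>space M. \<exists>k\<le>2^m. 2*a < \<bar>W (u m k) \<omega>\<bar>})"
  have ZmM: "Zm m \<in> sets M" for m
  proof -
    have "Zm m = (\<Union>k\<in>{..2^m}. {\<omega>\<in>space M. 2*a < \<bar>W (u m k) \<omega>\<bar>})" by (auto simp: Zm_def)
    moreover have "{\<omega>\<in>space M. 2*a < \<bar>W (u m k) \<omega>\<bar>} \<in> sets M" for k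
      using WM[OF u_s[of m k]] by measurable
    ultimately show ?thesis by auto
  qed
  have Zmb: "measure M (Zm m) \<le> 2 * c" for m
  proof -
    define n where "n = (2::nat)^m"
    have "measure M {\<omega>\<in>space M. \<exists>k\<le>n. 2*a < \<bar>W (u m k) \<omega>\<bar>}
       \<le> measure M {\<omega>\<in>space M. a < \<bar>W (u m n) \<omega>\<bar>} / (1 - c)"
    proof (rule ottaviani[OF P, where G="\<lambda>k. F (u m k)"])
      show "sets (F (u m k)) \<subseteq> sets M \<and> space (F (u m k)) = space M" for k using Fsp by auto
      show "W (u m j) \<in> borel_measurable (F (u m k))" if "j \<le> k" "k \<le> n" for j k
        using meas_sub[OF Wm[OF u_s] Fmono[OF u_mono[OF that(1)]]] Fsp by auto
      show "measure M {\<omega>\<in>space M. a < \<bar>W (u m n) \<omega> - W (u m k) \<omega>\<bar>} \<le> c" if "k \<le> n" for k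
        using tail[OF u_s u_mono[OF that]] u_le[of n m] by (simp add: n_def)
      show "c < 1" using c0' by simp
      fix k A assume k: "k \<le> n" and A: "A \<in> sets (F (u m k))"
      show "measure M (A \<inter> {\<omega>\<in>space M. \<bar>W (u m n) \<omega> - W (u m k) \<omega>\<bar> \<le> a}) =
        measure M A * measure M {\<omega>\<in>space M. \<bar>W (u m n) \<omega> - W (u m k) \<omega>\<bar> \<le> a}"
      proof (cases "k = n")
        case True
        have "A \<subseteq> space M" using A Fsp[of "u m k"] sets.sets_into_space by blast
        then show ?thesis using True a prob_space by (simp add: Int_absorb2)
      next
        case False
        then have "k < n" using k by simp
        then have lt: "u m k < u m n"
          using H by (simp add: u_def divide_strict_right_mono)
        have "{\<omega>\<in>space M. \<bar>W (u m n) \<omega> - W (u m k) \<omega>\<bar> \<le> a}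
            = (\<lambda>\<omega>. W (u m n) \<omega> - W (u m k) \<omega>) -` {x. \<bar>x\<bar> \<le> a} \<inter> space M" by auto
        moreover have "{x::real. \<bar>x\<bar> \<le> a} \<in> sets borel" by measurable
        ultimately have "{\<omega>\<in>space M. \<bar>W (u m n) \<omega> - W (u m k) \<omega>\<bar> \<le> a} \<in>
            {(\<lambda>\<omega>. W (u m n) \<omega> - W (u m k) \<omega>) -` B \<inter> space M | B. B \<in> sets borel}" by blast
        then show ?thesis using indep_setD[OF Wi[OF u_s lt] A] by simp
      qed
    qed
    also have "{\<omega>\<in>space M. a < \<bar>W (u m n) \<omega>\<bar>} = {\<omega>\<in>space M. a < \<bar>W (s + H) \<omega> - W s \<omega>\<bar>}"
      using W0 by (auto simp: n_def u_top)
    also have "measure M \<dots> / (1 - c) \<le> c / (1 - c)"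
      using tail[of s "s + H"] H c0' by (intro divide_right_mono) auto
    also have "c / (1 - c) \<le> c / (1/2)"
      using c0' cpos by (intro divide_left_mono) auto
    finally show ?thesis by (simp add: Zm_def n_def)
  qed
  have inc: "incseq Zm"
  proof (rule incseq_SucI)
    fix m show "Zm m \<subseteq> Zm (Suc m)"
    proof
      fix \<omega> assume "\<omega> \<in> Zm m"
      then obtain k where k: "k \<le> 2^m" "2*a < \<bar>W (u m k) \<omega>\<bar>" "\<omega> \<in> space M" by (auto simp: Zm_def)
      have "u (Suc m) (2*k) = u m k" by (simp add: u_def)
      moreover have "2*k \<le> 2^Suc m" using k by simp
      ultimately show "\<omega> \<in> Zm (Suc m)" using k unfolding Zm_def by (metis (mono_tags, lifting) mem_Collect_eq)
    qed
  qed
  define Z where "Z = (\<Union>m. Zm m)"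
  have ZM: "Z \<in> sets M" using ZmM by (auto simp: Z_def)
  have "(\<lambda>m. measure M (Zm m)) \<longlonglongrightarrow> measure M Z"
    unfolding Z_def using ZmM inc by (intro finite_Lim_measure_incseq) auto
  then have Zb: "measure M Z \<le> 2 * c"
    using Zmb by (intro Lim_bounded[where M=0]) auto
  have pw: "\<forall>\<omega>\<in>space M. \<omega> \<notin> Z \<longrightarrow> continuous_on {s..} (\<lambda>t. W t \<omega>) \<longrightarrow> (\<forall>r\<in>{s..s+H}. \<bar>W r \<omega>\<bar> \<le> 2*a)"
  proof (rule ballI, rule impI, rule impI)
    fix \<omega> assume \<omega>: "\<omega> \<in> space M" "\<omega> \<notin> Z" and cont: "continuous_on {s..} (\<lambda>t. W t \<omega>)"
    have b: "\<bar>W (s + H * real k / 2^m) \<omega>\<bar> \<le> 2*a" if "k \<le> (2::nat)^m" for m k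
      using \<omega> that by (force simp: Z_def Zm_def u_def)
    show "\<forall>r\<in>{s..s+H}. \<bar>W r \<omega>\<bar> \<le> 2*a"
      using dyadic_closed[OF cont H, of "2*a"] b by blast
  qed
  have "measure M Z \<le> 6 * H^2 / a^4" using Zb by (simp add: c_def)
  then show ?thesis using pw ZM by blast
qed



lemma rat_near:
  fixes t T \<rho> :: real
  assumes "t \<in> {0..T}" "0 < T" "0 < \<rho>"
  shows "\<exists>q\<in>\<rat>. q \<in> {0..T} \<and> \<bar>q - t\<bar> < \<rho>"
proof (cases "t < T")
  case True
  obtain q where "q \<in> \<rat>" "t < q" "q < min T (t + \<rho>)"
    using Rats_dense_in_real[of t "min T (t + \<rho>)"] True assms by auto
  then show ?thesis using assms by (intro bexI[of _ q]) auto
next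
  case False
  then have tT: "t = T" using assms by auto
  obtain q where "q \<in> \<rat>" "max 0 (T - \<rho>) < q" "q < T"
    using Rats_dense_in_real[of "max 0 (T - \<rho>)" T] assms by auto
  then show ?thesis using assms tT by (intro bexI[of _ q]) auto
qed

lemma right_rat:
  fixes f g :: "real \<Rightarrow> real"
  assumes "continuous (at_right x) f" "continuous (at_right x) g" "0 < \<gamma>"
  shows "\<exists>d\<in>\<rat>. x < d \<and> d < x + 1 \<and> \<bar>f d - f x\<bar> < \<gamma> \<and> \<bar>g d - g x\<bar> < \<gamma>"
proof -
  have "(f \<longlongrightarrow> f x) (at_right x)" "(g \<longlongrightarrow> g x) (at_right x)"
    using assms by (simp_all add: continuous_within)
  then have "eventually (\<lambda>d. dist (f d) (f x) < \<gamma>) (at_right x)" "eventually (\<lambda>d. dist (g d) (g x) < \<gamma>) (at_right x)"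
    using assms(3) by (auto intro: tendstoD)
  moreover have "eventually (\<lambda>d. d < x + 1) (at_right x)"
    unfolding eventually_at_right_field by (intro exI[of _ "x+1"]) auto
  ultimately have "eventually (\<lambda>d. d < x + 1 \<and> \<bar>f d - f x\<bar> < \<gamma> \<and> \<bar>g d - g x\<bar> < \<gamma>) (at_right x)"
    by eventually_elim (auto simp: dist_real_def)
  then obtain b where b: "x < b" "\<And>y. x < y \<Longrightarrow> y < b \<Longrightarrow> y < x + 1 \<and> \<bar>f y - f x\<bar> < \<gamma> \<and> \<bar>g y - g x\<bar> < \<gamma>"
    unfolding eventually_at_right_field by blast
  obtain d where "d \<in> \<rat>" "x < d" "d < b" using Rats_dense_in_real[OF b(1)] by blast
  then show ?thesis using b(2)[of d] by blast
qed

lemma extend_good: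
  fixes Y :: "real \<Rightarrow> real \<Rightarrow> real" and T h \<epsilon> :: real and N :: real
  assumes T: "0 < T" and h: "0 < h" and eps: "0 < \<epsilon>"
    and cad: "\<And>t x. t \<in> {0..T} \<Longrightarrow> continuous (at_right x) (Y t)"
    and contt: "\<And>d. d \<in> \<rat> \<Longrightarrow> continuous_on {0..T} (\<lambda>t. Y t d)"
    and RC: "\<And>q1 q2 d. q1 \<in> \<rat> \<Longrightarrow> q2 \<in> \<rat> \<Longrightarrow> q1 \<in> {0..T} \<Longrightarrow> q2 \<in> {0..T} \<Longrightarrow>
        \<bar>q2 - q1\<bar> \<le> h \<Longrightarrow> d \<in> \<rat> \<Longrightarrow> \<bar>d\<bar> \<le> N + 1 \<Longrightarrow> \<bar>Y q2 d - Y q1 d\<bar> \<le> \<epsilon> / 2"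
  shows "\<forall>s\<in>{0..T}. \<forall>t\<in>{0..T}. \<bar>t - s\<bar> \<le> h / 2 \<longrightarrow> (\<forall>x. \<bar>x\<bar> \<le> N \<longrightarrow> \<bar>Y t x - Y s x\<bar> \<le> \<epsilon>)"
proof (intro ballI impI allI)
  fix s t x assume s: "s \<in> {0..T}" and t: "t \<in> {0..T}" and st: "\<bar>t - s\<bar> \<le> h / 2" and x: "\<bar>x\<bar> \<le> N"
  define \<gamma> where "\<gamma> = \<epsilon> / 8"
  have g0: "0 < \<gamma>" using eps by (simp add: \<gamma>_def)
  obtain d where d: "d \<in> \<rat>" "x < d" "d < x + 1" "\<bar>Y t d - Y t x\<bar> < \<gamma>" "\<bar>Y s d - Y s x\<bar> < \<gamma>"
    using right_rat[OF cad[OF t] cad[OF s] g0] by blast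
  have dN: "\<bar>d\<bar> \<le> N + 1" using d x by linarith
  have cd: "continuous_on {0..T} (\<lambda>t. Y t d)" using contt[OF d(1)] .
  obtain \<rho>t where \<rho>t: "\<rho>t > 0" "\<And>t'. t' \<in> {0..T} \<Longrightarrow> \<bar>t' - t\<bar> < \<rho>t \<Longrightarrow> \<bar>Y t' d - Y t d\<bar> < \<gamma>"
    using cd t g0 unfolding continuous_on_iff dist_real_def by metis
  obtain \<rho>s where \<rho>s: "\<rho>s > 0" "\<And>t'. t' \<in> {0..T} \<Longrightarrow> \<bar>t' - s\<bar> < \<rho>s \<Longrightarrow> \<bar>Y t' d - Y s d\<bar> < \<gamma>"
    using cd s g0 unfolding continuous_on_iff dist_real_def by metis
  obtain qt where qt: "qt \<in> \<rat>" "qt \<in> {0..T}" "\<bar>qt - t\<bar> < min \<rho>t (h/4)"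
    using rat_near[OF t T, of "min \<rho>t (h/4)"] \<rho>t h by auto
  obtain qs where qs: "qs \<in> \<rat>" "qs \<in> {0..T}" "\<bar>qs - s\<bar> < min \<rho>s (h/4)"
    using rat_near[OF s T, of "min \<rho>s (h/4)"] \<rho>s h by auto
  have "\<bar>qt - qs\<bar> \<le> h" using qt(3) qs(3) st by linarith
  then have "\<bar>Y qt d - Y qs d\<bar> \<le> \<epsilon> / 2" using RC[OF qs(1) qt(1) qs(2) qt(2) _ d(1) dN] by simp
  moreover have "\<bar>Y qt d - Y t d\<bar> < \<gamma>" using \<rho>t(2)[OF qt(2)] qt(3) by simp
  moreover have "\<bar>Y qs d - Y s d\<bar> < \<gamma>" using \<rho>s(2)[OF qs(2)] qs(3) by simp
  ultimately show "\<bar>Y t x - Y s x\<bar> \<le> \<epsilon>" using d(4,5) unfolding \<gamma>_def abs_le_iff abs_less_iff by linarith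
qed



lemma flow_filt:
  assumes Xm: "\<And>u v y. 0 \<le> u \<Longrightarrow> u \<le> v \<Longrightarrow> (\<lambda>\<omega>. X u v \<omega> y) \<in> borel_measurable M"
    and s: "0 \<le> s"
  shows "space (flow_filtration M X s t) = space M \<and> sets (flow_filtration M X s t) \<subseteq> sets M"
    and "t \<le> t' \<Longrightarrow> sets (flow_filtration M X s t) \<subseteq> sets (flow_filtration M X s t')"
proof -
  let ?G = "\<lambda>t. {(\<lambda>\<omega>. X u v \<omega> y) -` B \<inter> space M | u v y B.
        s \<le> u \<and> u \<le> v \<and> v \<le> t \<and> B \<in> sets borel}"
  have GP: "?G t \<subseteq> Pow (space M)" for t by auto
  have GM: "?G t \<subseteq> sets M" for t
  proof
    fix A assume "A \<in> ?G t"
    then obtain u v y B where A: "A = (\<lambda>\<omega>. X u v \<omega> y) -` B \<inter> space M" "s \<le> u" "u \<le> v" "B \<in> sets borel"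
      by blast
    have "(\<lambda>\<omega>. X u v \<omega> y) \<in> borel_measurable M" using Xm A s by simp
    then show "A \<in> sets M" using A by (simp add: measurable_sets)
  qed
  show "space (flow_filtration M X s t) = space M \<and> sets (flow_filtration M X s t) \<subseteq> sets M"
    unfolding flow_filtration_def
    using GP[of t] GM[of t] by (simp add: sets.sigma_sets_subset)
  assume "t \<le> t'"
  then have "?G t \<subseteq> ?G t'" by force
  then show "sets (flow_filtration M X s t) \<subseteq> sets (flow_filtration M X s t')"
    unfolding flow_filtration_def using GP by (simp add: sigma_sets_mono')
qed

lemma AE_from_small:
  assumes P: "prob_space M"
    and sm: "\<And>\<eta>. 0 < \<eta> \<Longrightarrow> \<exists>Z\<in>sets M. measure M Z \<le> \<eta> \<and> (AE \<omega> in M. \<omega> \<notin> Z \<longrightarrow> Q \<omega>)"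
  shows "AE \<omega> in M. Q \<omega>"
proof -
  interpret prob_space M by fact
  have "\<forall>j::nat. \<exists>Z. Z \<in> sets M \<and> measure M Z \<le> 1 / (real j + 1) \<and> (AE \<omega> in M. \<omega> \<notin> Z \<longrightarrow> Q \<omega>)"
  proof
    fix j :: nat
    have "0 < 1 / (real j + 1)" by simp
    then show "\<exists>Z. Z \<in> sets M \<and> measure M Z \<le> 1 / (real j + 1) \<and> (AE \<omega> in M. \<omega> \<notin> Z \<longrightarrow> Q \<omega>)"
      using sm by blast
  qed
  then obtain Zf where Zf0: "\<forall>j. Zf j \<in> sets M \<and> measure M (Zf j) \<le> 1 / (real j + 1) \<and> (AE \<omega> in M. \<omega> \<notin> Zf j \<longrightarrow> Q \<omega>)"
    using choice[of "\<lambda>j Z. Z \<in> sets M \<and> measure M Z \<le> 1 / (real j + 1) \<and> (AE \<omega> in M. \<omega> \<notin> Z \<longrightarrow> Q \<omega>)"] by blast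
  have Zf: "\<And>j. Zf j \<in> sets M" "\<And>j. measure M (Zf j) \<le> 1 / (real j + 1)"
      "\<And>j. AE \<omega> in M. \<omega> \<notin> Zf j \<longrightarrow> Q \<omega>"
    using Zf0 by auto
  define Zi where "Zi = (\<Inter>j. Zf j)"
  have ZiM: "Zi \<in> sets M" using Zf(1) by (auto simp: Zi_def)
  have "\<forall>j. measure M Zi \<le> 1 / (real j + 1)"
  proof
    fix j
    have "measure M Zi \<le> measure M (Zf j)" using Zf(1) ZiM by (intro finite_measure_mono) (auto simp: Zi_def)
    then show "measure M Zi \<le> 1 / (real j + 1)" using Zf(2)[of j] by simp
  qed
  then have allj: "\<And>j. measure M Zi \<le> 1 / (real j + 1)" by blast
  have "measure M Zi \<le> 0 + e" if e: "0 < e" for e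
  proof -
    obtain n where n: "inverse (real (Suc n)) < e" using reals_Archimedean[OF e] by blast
    have "1 / (real n + 1) = inverse (real (Suc n))" by (simp add: inverse_eq_divide)
    then show ?thesis using allj[of n] n by linarith
  qed
  then have "measure M Zi \<le> 0" by (rule field_le_epsilon)
  then have "Zi \<in> null_sets M" using ZiM measure_nonneg[of M Zi]
    by (simp add: emeasure_eq_measure null_sets_def)
  then have "AE \<omega> in M. \<omega> \<notin> Zi" by (rule AE_not_in)
  moreover have "AE \<omega> in M. \<forall>j. \<omega> \<notin> Zf j \<longrightarrow> Q \<omega>" using Zf(3) by (subst AE_all_countable) blast
  ultimately show ?thesis by eventually_elim (auto simp: Zi_def)
qed



lemma nat_large:
  fixes B :: real
  shows "\<exists>n::nat. B < real n"
  using reals_Archimedean2 by blast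

lemma div_le_from:
  fixes c d x :: real
  assumes "0 < d" "0 \<le> c" "c / d \<le> x" "0 < x"
  shows "c / x \<le> d"
  using assms by (simp add: field_simps)

lemma div_le_from':
  fixes c d x :: real
  assumes "c / d \<le> x" "0 < d" "0 \<le> c" "0 < x"
  shows "c / x \<le> d"
  using div_le_from[OF assms(2,3,1,4)] .

lemma core:
  fixes M :: "'a measure" and a :: "real \<Rightarrow> real" and X :: "real \<Rightarrow> real \<Rightarrow> 'a \<Rightarrow> real \<Rightarrow> real"
    and T C \<epsilon> \<eta> :: real and N :: nat
  assumes P: "prob_space M"
    and a: "a \<in> borel_measurable borel" and ag: "\<forall>z. \<bar>a z\<bar> \<le> C * (1 + \<bar>z\<bar>)"
    and Xm: "\<And>u v y. 0 \<le> u \<Longrightarrow> u \<le> v \<Longrightarrow> (\<lambda>\<omega>. X u v \<omega> y) \<in> borel_measurable M"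
    and cad: "\<And>u v \<omega>. 0 \<le> u \<Longrightarrow> u \<le> v \<Longrightarrow> \<omega> \<in> space M \<Longrightarrow> cadlag_nondecr (X u v \<omega>)"
    and coc: "\<And>s t r. 0 \<le> s \<Longrightarrow> s \<le> t \<Longrightarrow> t \<le> r \<Longrightarrow> AE \<omega> in M. X s r \<omega> = X t r \<omega> \<circ> X s t \<omega>"
    and wf: "\<And>x s. 0 \<le> s \<Longrightarrow> wiener_from M (flow_filtration M X s) s
          (\<lambda>t \<omega>. X s t \<omega> x - x - (LBINT r=s..t. a (X s r \<omega> x)))"
    and T: "0 < T" and eps: "0 < \<epsilon>" "\<epsilon> \<in> \<rat>" and eta: "0 < \<eta>"
  shows "\<exists>Z\<in>sets M. measure M Z \<le> \<eta> \<and> (AE \<omega> in M. \<omega> \<notin> Z \<longrightarrow>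
     (\<exists>h>0. \<forall>s\<in>{0..T}. \<forall>t\<in>{0..T}. \<bar>t - s\<bar> \<le> h \<longrightarrow>
           (\<forall>x. \<bar>x\<bar> \<le> real N \<longrightarrow> \<bar>X 0 t \<omega> x - X 0 s \<omega> x\<bar> \<le> \<epsilon>)))"
proof -
  interpret prob_space M by fact
  have C0: "0 \<le> C" using ag[rule_format, of 0] abs_ge_zero[of "a 0"] by simp
  define Ws where "Ws = (\<lambda>s y t \<omega>. X s t \<omega> y - y - (LBINT r=s..t. a (X s r \<omega> y)))"
  have gform: "\<forall>t\<ge>s. X s t \<omega> y = y + Ws s y t \<omega> + (LBINT r=s..t. a (X s r \<omega> y))" for s y \<omega>
    by (simp add: Ws_def)
  have wfs: "wiener_from M (flow_filtration M X s) s (Ws s y)" if "0 \<le> s" for s y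
    using wf[OF that, of y] by (simp add: Ws_def)
  have Wcont: "AE \<omega> in M. continuous_on {s..} (\<lambda>t. Ws s y t \<omega>)" if "0 \<le> s" for s y
    using wfs[OF that, of y] unfolding wiener_from_def by blast
  have AEc: "AE \<omega> in M. \<forall>s\<in>\<rat>. \<forall>y\<in>\<rat>. 0 \<le> s \<longrightarrow> continuous_on {s..} (\<lambda>t. Ws s y t \<omega>)"
    using Wcont by (simp add: AE_ball_countable countable_rat)
  have AEco: "AE \<omega> in M. \<forall>q2\<in>\<rat>. \<forall>q3\<in>\<rat>. 0 \<le> q2 \<longrightarrow> q2 \<le> q3 \<longrightarrow> X 0 q3 \<omega> = X q2 q3 \<omega> \<circ> X 0 q2 \<omega>"
    using coc by (simp add: AE_ball_countable countable_rat)
  have pathc: "continuous_on {s..t} (\<lambda>t. X s t \<omega> y)"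
    if "\<forall>s\<in>\<rat>. \<forall>y\<in>\<rat>. 0 \<le> s \<longrightarrow> continuous_on {s..} (\<lambda>t. Ws s y t \<omega>)"
       "s \<in> \<rat>" "y \<in> \<rat>" "0 \<le> s" "s \<le> t" for \<omega> s y t
    using det_path[OF a ag _ gform[of s \<omega> y]] that by blast
  define N1 where "N1 = real N + 1"
  have N1Q: "N1 \<in> \<rat>" by (simp add: N1_def)
  have N10: "0 < N1" by (simp add: N1_def)
  define QT where "QT = \<rat> \<inter> {0..T}"
  have cQT: "countable QT" by (simp add: QT_def countable_rat)
  define Y where "Y = (\<lambda>m::nat. {\<omega>\<in>space M. \<exists>q\<in>QT. real m < \<bar>X 0 q \<omega> N1\<bar> \<or> real m < \<bar>X 0 q \<omega> (-N1)\<bar>})"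
  have YM: "Y m \<in> sets M" for m
  proof -
    have "Y m = (\<Union>q\<in>QT. {\<omega>\<in>space M. real m < \<bar>X 0 q \<omega> N1\<bar> \<or> real m < \<bar>X 0 q \<omega> (-N1)\<bar>})"
      by (auto simp: Y_def)
    moreover have "{\<omega>\<in>space M. real m < \<bar>X 0 q \<omega> N1\<bar> \<or> real m < \<bar>X 0 q \<omega> (-N1)\<bar>} \<in> sets M" if "q \<in> QT" for q
    proof -
      have [measurable]: "(\<lambda>\<omega>. X 0 q \<omega> N1) \<in> borel_measurable M" "(\<lambda>\<omega>. X 0 q \<omega> (-N1)) \<in> borel_measurable M"
        using Xm that by (auto simp: QT_def)
      show ?thesis by measurable
    qed
    ultimately show ?thesis using cQT by (auto intro!: sets.countable_UN')
  qed
  have Ydec: "decseq Y"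
    unfolding decseq_def
  proof (intro allI impI subsetI)
    fix m n \<omega> assume mn: "m \<le> n" and "\<omega> \<in> Y n"
    then obtain q where q: "q \<in> QT" "real n < \<bar>X 0 q \<omega> N1\<bar> \<or> real n < \<bar>X 0 q \<omega> (-N1)\<bar>" "\<omega> \<in> space M"
      by (auto simp: Y_def)
    have "real m \<le> real n" using mn by simp
    then have "real m < \<bar>X 0 q \<omega> N1\<bar> \<or> real m < \<bar>X 0 q \<omega> (-N1)\<bar>" using q(2) by linarith
    then show "\<omega> \<in> Y m" using q by (auto simp: Y_def)
  qed
  have Ynull: "AE \<omega> in M. \<omega> \<notin> (\<Inter>m. Y m)"
    using AEc
  proof eventually_elim
    fix \<omega> assume \<omega>: "\<forall>s\<in>\<rat>. \<forall>y\<in>\<rat>. 0 \<le> s \<longrightarrow> continuous_on {s..} (\<lambda>t. Ws s y t \<omega>)"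
    have c1: "continuous_on {0..T} (\<lambda>t. X 0 t \<omega> N1)" using pathc[OF \<omega>, of 0 N1 T] N1Q T by auto
    have c2: "continuous_on {0..T} (\<lambda>t. X 0 t \<omega> (-N1))" using pathc[OF \<omega>, of 0 "-N1" T] N1Q T by auto
    obtain B1 where B1: "\<forall>t\<in>{0..T}. \<bar>X 0 t \<omega> N1\<bar> \<le> B1"
      using compact_imp_bounded[OF compact_continuous_image[OF c1 compact_Icc]] unfolding bounded_iff by auto
    obtain B2 where B2: "\<forall>t\<in>{0..T}. \<bar>X 0 t \<omega> (-N1)\<bar> \<le> B2"
      using compact_imp_bounded[OF compact_continuous_image[OF c2 compact_Icc]] unfolding bounded_iff by auto
    obtain m :: nat where m: "max B1 B2 < real m" using nat_large by blast
    have "\<omega> \<notin> Y m" using B1 B2 m by (force simp: Y_def QT_def)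
    then show "\<omega> \<notin> (\<Inter>m. Y m)" by blast
  qed
  have "(\<lambda>m. measure M (Y m)) \<longlonglongrightarrow> measure M (\<Inter>m. Y m)"
    using YM Ydec by (intro finite_Lim_measure_decseq) auto
  moreover have "measure M (\<Inter>m. Y m) = 0"
  proof -
    have IM: "(\<Inter>m. Y m) \<in> sets M" using YM by auto
    have eqs: "{\<omega>\<in>space M. \<not> \<omega> \<notin> (\<Inter>m. Y m)} = (\<Inter>m. Y m)" by (auto simp: Y_def)
    have "emeasure M (\<Inter>m. Y m) = 0" using AE_iff_measurable[OF IM eqs] Ynull by blast
    then show ?thesis by (simp add: measure_def)
  qed
  ultimately have "eventually (\<lambda>m. measure M (Y m) < \<eta>/2) sequentially"
    using eta by (intro order_tendstoD) auto
  then obtain m :: nat where mY: "measure M (Y m) \<le> \<eta>/2"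
    unfolding eventually_sequentially by (meson le_refl less_imp_le)
  define \<delta> where "\<delta> = \<epsilon> / 8"
  have \<delta>0: "0 < \<delta>" using eps by (simp add: \<delta>_def)
  have \<delta>Q: "\<delta> \<in> \<rat>" using eps by (simp add: \<delta>_def)
  define L where "L = nat \<lceil>2 * real m / \<delta>\<rceil>"
  have L1: "2 * real m / \<delta> \<le> real L" by (simp add: L_def) linarith
  have L2: "real L < 2 * real m / \<delta> + 1"
  proof -
    have "0 \<le> 2 * real m / \<delta>" using \<delta>0 by simp
    then show ?thesis by (simp add: L_def) linarith
  qed
  define yg where "yg = (\<lambda>i::nat. - real m + real i * \<delta>)"
  define Mb where "Mb = real m + 2 * \<delta>"
  have ygQ: "yg i \<in> \<rat>" for i using \<delta>Q by (simp add: yg_def)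
  have yg_bd: "\<bar>yg i\<bar> \<le> Mb" if "i \<le> L + 1" for i
  proof -
    have "real i * \<delta> \<le> (real L + 1) * \<delta>" using that \<delta>0 by (intro mult_right_mono) auto
    also have "\<dots> \<le> (2 * real m / \<delta> + 2) * \<delta>" using L2 \<delta>0 by (intro mult_right_mono) auto
    also have "\<dots> = 2 * real m + 2 * \<delta>" using \<delta>0 by (simp add: field_simps)
    finally have "real i * \<delta> \<le> 2 * real m + 2 * \<delta>" .
    moreover have "0 \<le> real i * \<delta>" using \<delta>0 by simp
    ultimately have "- Mb \<le> yg i" "yg i \<le> Mb" using \<delta>0 unfolding yg_def Mb_def by linarith+
    then show ?thesis by (simp add: abs_le_iff)
  qed
  have Mb0: "0 \<le> Mb" using \<delta>0 by (simp add: Mb_def)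
  define aa where "aa = \<epsilon> / 32"
  have aa0: "0 < aa" using eps by (simp add: aa_def)
  define B where "B = max (4 * C) (max (64 * C * (1 + Mb + \<epsilon>/16) / \<epsilon>)
       (max (24 / aa^4) ((T + 1) * (real L + 2) * 48 / (aa^4 * \<eta>))))"
  obtain n :: nat where n: "max 1 B < real n" using nat_large by blast
  have n1: "1 \<le> real n" and nB: "B \<le> real n" using n by auto
  have B1: "4 * C \<le> B" and B2: "64 * C * (1 + Mb + \<epsilon>/16) / \<epsilon> \<le> B"
    and B3: "24 / aa^4 \<le> B" and B4: "(T + 1) * (real L + 2) * 48 / (aa^4 * \<eta>) \<le> B"
    unfolding B_def by (simp_all add: le_max_iff_disj)
  have npos: "0 < real n" using n1 by simp
  define h where "h = 1 / real n"
  define H where "H = 2 * h"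
  have h0: "0 < h" using npos by (simp add: h_def)
  have H0: "0 < H" using h0 by (simp add: H_def)
  have HC: "C * H \<le> 1/2"
  proof -
    have "(2 * C) / (1/2) \<le> real n" using nB B1 by simp
    then have "(2 * C) / real n \<le> 1/2" by (rule div_le_from') (use C0 npos in simp_all)
    then show ?thesis by (simp add: H_def h_def)
  qed
  have Hdrift: "2 * H * (C * (1 + Mb + \<epsilon>/16)) \<le> \<epsilon>/16"
  proof -
    have e: "(4 * C * (1 + Mb + \<epsilon>/16)) / (\<epsilon>/16) = 64 * C * (1 + Mb + \<epsilon>/16) / \<epsilon>"
      using eps by (simp add: field_simps)
    have c0: "0 \<le> 4 * C * (1 + Mb + \<epsilon>/16)" using C0 Mb0 eps by simp
    have "(4 * C * (1 + Mb + \<epsilon>/16)) / (\<epsilon>/16) \<le> real n" unfolding e using B2 nB by (rule order.trans)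
    then have "(4 * C * (1 + Mb + \<epsilon>/16)) / real n \<le> \<epsilon>/16"
      by (rule div_le_from') (use c0 npos eps in simp_all)
    then show ?thesis by (simp add: H_def h_def field_simps)
  qed
  have Haa: "3 * H^2 / aa^4 \<le> 1/2"
  proof -
    have "(12 / aa^4) / (1/2) \<le> real n" using nB B3 by simp
    then have "(12 / aa^4) / real n \<le> 1/2" by (rule div_le_from') (use npos in simp_all)
    moreover have "3 * H^2 / aa^4 = (12 / aa^4) / real n * (1 / real n)"
      by (simp add: H_def h_def power2_eq_square field_simps)
    moreover have "(12 / aa^4) / real n * (1 / real n) \<le> (12 / aa^4) / real n"
      using n1 aa0 by (intro mult_left_le) auto
    ultimately show ?thesis by linarith
  qed
  define K where "K = nat \<lfloor>T * real n\<rfloor>"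
  have K1: "real K + 1 \<le> (T + 1) * real n"
  proof -
    have "real K \<le> T * real n" using T npos by (simp add: K_def)
    then show ?thesis using n1 by (simp add: algebra_simps)
  qed
  have Htot: "(real K + 1) * (real L + 2) * (6 * H^2 / aa^4) \<le> \<eta>/2"
  proof -
    have "(real K + 1) * (real L + 2) * (6 * H^2 / aa^4) \<le> (T + 1) * real n * (real L + 2) * (6 * H^2 / aa^4)"
      using K1 aa0 by (intro mult_right_mono) auto
    also have "\<dots> = ((T + 1) * (real L + 2) * 24 / aa^4) / real n"
      using npos aa0 by (simp add: H_def h_def power2_eq_square field_simps)
    also have "\<dots> \<le> \<eta>/2"
    proof -
      have e: "((T + 1) * (real L + 2) * 24 / aa^4) / (\<eta>/2) = (T + 1) * (real L + 2) * 48 / (aa^4 * \<eta>)"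
        using eta aa0 by (simp add: field_simps)
      have c0: "0 \<le> (T + 1) * (real L + 2) * 24 / aa^4" using T by simp
      have "((T + 1) * (real L + 2) * 24 / aa^4) / (\<eta>/2) \<le> real n" unfolding e using B4 nB by (rule order.trans)
      then show ?thesis by (rule div_le_from') (use c0 npos eta in simp_all)
    qed
    finally show ?thesis .
  qed
  define tk where "tk = (\<lambda>k::nat. real k / real n)"
  have tk0: "0 \<le> tk k" for k by (simp add: tk_def)
  have tkQ: "tk k \<in> \<rat>" for k by (simp add: tk_def)
  have ex: "\<forall>p::nat\<times>nat. \<exists>Z. Z \<in> sets M \<and> measure M Z \<le> 6 * H^2 / aa^4 \<and>
     (\<forall>\<omega>\<in>space M. \<omega> \<notin> Z \<longrightarrow> continuous_on {tk (fst p)..} (\<lambda>t. Ws (tk (fst p)) (yg (snd p)) t \<omega>) \<longrightarrow>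
        (\<forall>r\<in>{tk (fst p)..tk (fst p)+H}. \<bar>Ws (tk (fst p)) (yg (snd p)) r \<omega>\<bar> \<le> 2*aa))"
  proof
    fix p :: "nat \<times> nat"
    note ff = flow_filt[of X M, OF Xm tk0[of "fst p"]]
    show "\<exists>Z. Z \<in> sets M \<and> measure M Z \<le> 6 * H^2 / aa^4 \<and>
     (\<forall>\<omega>\<in>space M. \<omega> \<notin> Z \<longrightarrow> continuous_on {tk (fst p)..} (\<lambda>t. Ws (tk (fst p)) (yg (snd p)) t \<omega>) \<longrightarrow>
        (\<forall>r\<in>{tk (fst p)..tk (fst p)+H}. \<bar>Ws (tk (fst p)) (yg (snd p)) r \<omega>\<bar> \<le> 2*aa))"
      using wiener_sup[OF P wfs[OF tk0[of "fst p"], of "yg (snd p)"] ff(1) ff(2) H0 aa0 Haa] by blast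
  qed
  then obtain Zf where Zf: "\<And>p. Zf p \<in> sets M" "\<And>p. measure M (Zf p) \<le> 6 * H^2 / aa^4"
    "\<And>p \<omega>. \<omega> \<in> space M \<Longrightarrow> \<omega> \<notin> Zf p \<Longrightarrow> continuous_on {tk (fst p)..} (\<lambda>t. Ws (tk (fst p)) (yg (snd p)) t \<omega>) \<Longrightarrow>
        (\<forall>r\<in>{tk (fst p)..tk (fst p)+H}. \<bar>Ws (tk (fst p)) (yg (snd p)) r \<omega>\<bar> \<le> 2*aa)"
    using choice[OF ex] by blast
  define I where "I = {..K} \<times> {..L+1}"
  have Ifin: "finite I" by (simp add: I_def)
  define Z where "Z = Y m \<union> (\<Union>p\<in>I. Zf p)"
  have ZM: "Z \<in> sets M" using YM Zf(1) Ifin by (auto simp: Z_def)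
  have Zmeas: "measure M Z \<le> \<eta>"
  proof -
    have "measure M Z \<le> measure M (Y m) + measure M (\<Union>p\<in>I. Zf p)"
      unfolding Z_def using YM Zf(1) Ifin by (intro measure_Un_le) auto
    also have "measure M (\<Union>p\<in>I. Zf p) \<le> (\<Sum>p\<in>I. measure M (Zf p))"
      using Ifin Zf(1) by (intro finite_measure_subadditive_finite) auto
    also have "\<dots> \<le> (\<Sum>p\<in>I. 6 * H^2 / aa^4)" using Zf(2) by (intro sum_mono) auto
    also have "\<dots> = (real K + 1) * (real L + 2) * (6 * H^2 / aa^4)"
      by (simp add: I_def card_cartesian_product algebra_simps)
    finally show ?thesis using mY Htot by linarith
  qed
  have good: "AE \<omega> in M. \<omega> \<notin> Z \<longrightarrow>
     (\<exists>h>0. \<forall>s\<in>{0..T}. \<forall>t\<in>{0..T}. \<bar>t - s\<bar> \<le> h \<longrightarrow>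
           (\<forall>x. \<bar>x\<bar> \<le> real N \<longrightarrow> \<bar>X 0 t \<omega> x - X 0 s \<omega> x\<bar> \<le> \<epsilon>))"
    using AEc AEco AE_space
  proof eventually_elim
    fix \<omega> assume \<omega>c: "\<forall>s\<in>\<rat>. \<forall>y\<in>\<rat>. 0 \<le> s \<longrightarrow> continuous_on {s..} (\<lambda>t. Ws s y t \<omega>)"
      and \<omega>co: "\<forall>q2\<in>\<rat>. \<forall>q3\<in>\<rat>. 0 \<le> q2 \<longrightarrow> q2 \<le> q3 \<longrightarrow> X 0 q3 \<omega> = X q2 q3 \<omega> \<circ> X 0 q2 \<omega>"
      and \<omega>s: "\<omega> \<in> space M"
    show "\<omega> \<notin> Z \<longrightarrow> (\<exists>h>0. \<forall>s\<in>{0..T}. \<forall>t\<in>{0..T}. \<bar>t - s\<bar> \<le> h \<longrightarrow>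
           (\<forall>x. \<bar>x\<bar> \<le> real N \<longrightarrow> \<bar>X 0 t \<omega> x - X 0 s \<omega> x\<bar> \<le> \<epsilon>))"
    proof
      assume \<omega>Z: "\<omega> \<notin> Z"
      have mono_X: "mono (X u v \<omega>)" if "0 \<le> u" "u \<le> v" for u v
        using cad[OF that \<omega>s] by (simp add: cadlag_nondecr_def)
      have loc: "\<bar>X (tk k) r \<omega> (yg i) - yg i\<bar> \<le> \<epsilon>/8"
        if "k \<le> K" "i \<le> L + 1" "r \<in> {tk k..tk k + H}" for k i r
      proof -
        have pI: "(k, i) \<in> I" using that by (simp add: I_def)
        have cW: "continuous_on {tk k..} (\<lambda>t. Ws (tk k) (yg i) t \<omega>)"
          using \<omega>c tkQ ygQ tk0 by blast
        have "\<forall>r\<in>{tk k..tk k+H}. \<bar>Ws (tk k) (yg i) r \<omega>\<bar> \<le> 2*aa"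
          using Zf(3)[of \<omega> "(k, i)"] \<omega>s \<omega>Z pI cW by (auto simp: Z_def)
        then have b1: "\<forall>r\<in>{tk k..tk k+H}. \<bar>X (tk k) r \<omega> (yg i) - yg i\<bar> \<le> 2*aa + 2 * H * (C * (1 + Mb + 2*aa))"
          using det_local[OF a ag cW gform[of "tk k" \<omega> "yg i"] less_imp_le[OF H0] HC yg_bd[OF that(2)]]
          by blast
        have b2: "\<bar>X (tk k) r \<omega> (yg i) - yg i\<bar> \<le> 2*aa + 2 * H * (C * (1 + Mb + 2*aa))"
          using bspec[OF b1 that(3)] .
        have b3: "2*aa + 2 * H * (C * (1 + Mb + 2*aa)) \<le> \<epsilon>/8"
          using Hdrift by (simp add: aa_def)
        show ?thesis using b2 b3 by (rule order.trans)
      qed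
      have step: "\<bar>X 0 q \<omega> d - X 0 (tk k) \<omega> d\<bar> \<le> \<epsilon>/4"
        if "k \<le> K" "tk k \<le> T" "q \<in> \<rat>" "tk k \<le> q" "q \<le> tk k + H" "d \<in> \<rat>" "\<bar>d\<bar> \<le> N1" for k q d
      proof -
        define z where "z = X 0 (tk k) \<omega> d"
        have "X 0 q \<omega> = X (tk k) q \<omega> \<circ> X 0 (tk k) \<omega>"
          using \<omega>co tkQ[of k] that(3,4) tk0[of k] by blast
        then have "X 0 q \<omega> d = (X (tk k) q \<omega> \<circ> X 0 (tk k) \<omega>) d" by (rule fun_cong)
        then have cocy: "X 0 q \<omega> d = X (tk k) q \<omega> z" by (simp only: o_def z_def)
        have tkQT: "tk k \<in> QT" using tkQ tk0 that by (simp add: QT_def)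
        have "\<omega> \<notin> Y m" using \<omega>Z by (simp add: Z_def)
        then have bN: "\<bar>X 0 (tk k) \<omega> N1\<bar> \<le> real m" "\<bar>X 0 (tk k) \<omega> (-N1)\<bar> \<le> real m"
          using tkQT \<omega>s by (auto simp: Y_def not_less)
        have "X 0 (tk k) \<omega> (-N1) \<le> z" "z \<le> X 0 (tk k) \<omega> N1"
          using mono_X[OF order.refl tk0[of k]] that(7) unfolding z_def mono_def by auto
        then have zb: "- real m \<le> z" "z \<le> real m" using bN by linarith+
        define i where "i = nat \<lfloor>(z + real m) / \<delta>\<rfloor>"
        have zm0: "0 \<le> (z + real m) / \<delta>" using zb \<delta>0 by simp
        have ir: "real i = of_int \<lfloor>(z + real m) / \<delta>\<rfloor>" using zm0 by (simp add: i_def)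
        have i1: "real i \<le> (z + real m) / \<delta>" "(z + real m) / \<delta> < real i + 1"
          using ir by linarith+
        have iL: "i \<le> L"
        proof -
          have "(z + real m) / \<delta> \<le> 2 * real m / \<delta>" using zb \<delta>0 by (intro divide_right_mono) auto
          then have "real i \<le> real L" using i1 L1 by linarith
          then show ?thesis by simp
        qed
        have yz: "yg i \<le> z" "z \<le> yg (i + 1)"
        proof -
          have "real i * \<delta> \<le> z + real m" using i1 \<delta>0 by (simp add: field_simps)
          then show "yg i \<le> z" by (simp add: yg_def)
          have "z + real m \<le> (real i + 1) * \<delta>" using i1 \<delta>0 by (simp add: field_simps)
          then show "z \<le> yg (i + 1)" by (simp add: yg_def algebra_simps)
        qed
        have qr: "q \<in> {tk k..tk k + H}" using that by simp
        have l1: "\<bar>X (tk k) q \<omega> (yg i) - yg i\<bar> \<le> \<epsilon>/8" using loc[OF that(1) _ qr] iL by simp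
        have l2: "\<bar>X (tk k) q \<omega> (yg (i+1)) - yg (i+1)\<bar> \<le> \<epsilon>/8" using loc[OF that(1) _ qr] iL by simp
        have m1: "X (tk k) q \<omega> (yg i) \<le> X (tk k) q \<omega> z" "X (tk k) q \<omega> z \<le> X (tk k) q \<omega> (yg (i+1))"
          using mono_X[OF tk0[of k] that(4)] yz unfolding mono_def by auto
        have "yg (i+1) - yg i = \<delta>" by (simp add: yg_def algebra_simps)
        then have "\<bar>X (tk k) q \<omega> z - z\<bar> \<le> \<epsilon>/4"
          using l1 l2 m1 yz unfolding \<delta>_def abs_le_iff by linarith
        then show ?thesis using cocy by (simp add: z_def)
      qed
      have RC0: "\<bar>X 0 q2 \<omega> d - X 0 q1 \<omega> d\<bar> \<le> \<epsilon> / 2"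
        if "q1 \<in> \<rat>" "q2 \<in> \<rat>" "q1 \<in> {0..T}" "q2 \<in> {0..T}" "q1 \<le> q2" "q2 - q1 \<le> h" "d \<in> \<rat>" "\<bar>d\<bar> \<le> N1"
        for q1 q2 d
      proof -
        define k where "k = nat \<lfloor>q1 * real n\<rfloor>"
        have q0: "0 \<le> q1 * real n" using that(3) npos by simp
        have kr: "real k = of_int \<lfloor>q1 * real n\<rfloor>" using q0 by (simp add: k_def)
        have k1: "real k \<le> q1 * real n" "q1 * real n < real k + 1"
          using kr by linarith+
        have tkq: "tk k \<le> q1" using k1 npos by (simp add: tk_def field_simps)
        have qtk: "q1 < tk k + h" using k1 npos by (simp add: tk_def h_def field_simps)
        have kK: "k \<le> K"
        proof -
          have "q1 * real n \<le> T * real n" using that(3) npos by (intro mult_right_mono) auto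
          then show ?thesis unfolding k_def K_def by (intro nat_mono floor_mono)
        qed
        have tkT: "tk k \<le> T" using tkq that(3) by simp
        have a1: "\<bar>X 0 q1 \<omega> d - X 0 (tk k) \<omega> d\<bar> \<le> \<epsilon>/4"
          using step[OF kK tkT that(1) tkq _ that(7,8)] qtk h0 by (simp add: H_def)
        have a2: "\<bar>X 0 q2 \<omega> d - X 0 (tk k) \<omega> d\<bar> \<le> \<epsilon>/4"
          using step[OF kK tkT that(2) _ _ that(7,8)] tkq qtk that(5,6) by (simp add: H_def)
        show ?thesis using a1 a2 unfolding abs_le_iff by linarith
      qed
      have RC: "\<bar>X 0 q2 \<omega> d - X 0 q1 \<omega> d\<bar> \<le> \<epsilon> / 2"
        if "q1 \<in> \<rat>" "q2 \<in> \<rat>" "q1 \<in> {0..T}" "q2 \<in> {0..T}" "\<bar>q2 - q1\<bar> \<le> h" "d \<in> \<rat>" "\<bar>d\<bar> \<le> real N + 1"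
        for q1 q2 d :: real
      proof (cases "q1 \<le> q2")
        case True
        then show ?thesis using RC0[OF that(1-4) True _ that(6)] that(5,7) by (simp add: N1_def)
      next
        case False
        then have "\<bar>X 0 q1 \<omega> d - X 0 q2 \<omega> d\<bar> \<le> \<epsilon> / 2"
          using RC0[OF that(2,1,4,3) _ _ that(6)] that(5,7) by (simp add: N1_def)
        then show ?thesis by (simp add: abs_minus_commute)
      qed
      have ext: "\<forall>s\<in>{0..T}. \<forall>t\<in>{0..T}. \<bar>t - s\<bar> \<le> h / 2 \<longrightarrow> (\<forall>x. \<bar>x\<bar> \<le> real N \<longrightarrow> \<bar>X 0 t \<omega> x - X 0 s \<omega> x\<bar> \<le> \<epsilon>)"
      proof (rule extend_good[OF T h0 eps(1)])
        show "continuous (at_right x) (X 0 t \<omega>)" if "t \<in> {0..T}" for t x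
          using cad[of 0 t \<omega>] that \<omega>s by (auto simp: cadlag_nondecr_def)
        show "continuous_on {0..T} (\<lambda>t. X 0 t \<omega> d)" if "d \<in> \<rat>" for d
          using pathc[OF \<omega>c, of 0 d T] that T by auto
        show "\<bar>X 0 q2 \<omega> d - X 0 q1 \<omega> d\<bar> \<le> \<epsilon> / 2"
          if "q1 \<in> \<rat>" "q2 \<in> \<rat>" "q1 \<in> {0..T}" "q2 \<in> {0..T}" "\<bar>q2 - q1\<bar> \<le> h" "d \<in> \<rat>" "\<bar>d\<bar> \<le> real N + 1"
          for q1 q2 d using RC[OF that] .
      qed
      show "\<exists>h>0. \<forall>s\<in>{0..T}. \<forall>t\<in>{0..T}. \<bar>t - s\<bar> \<le> h \<longrightarrow>
           (\<forall>x. \<bar>x\<bar> \<le> real N \<longrightarrow> \<bar>X 0 t \<omega> x - X 0 s \<omega> x\<bar> \<le> \<epsilon>)"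
        using ext h0 by (intro exI[of _ "h/2"]) auto
    qed
  qed
  show ?thesis using ZM Zmeas good by blast
qed



theorem mainTheorem4:
  fixes M :: "'a measure" and \<phi> a :: "real \<Rightarrow> real"
    and X :: "real \<Rightarrow> real \<Rightarrow> 'a \<Rightarrow> real \<Rightarrow> real"
  assumes "\<phi> \<in> Phi_star"
    and "a \<in> borel_measurable borel" and "linear_growth a"
    and "harris_flow M \<phi> a X"
    and "T > 0"
  shows "AE \<omega> in M. \<forall>N>0. \<forall>\<epsilon>>0. \<exists>h>0. \<forall>s\<in>{0..T}. \<forall>t\<in>{0..T}. \<bar>t - s\<bar> \<le> h \<longrightarrow>
           (\<forall>x. \<bar>x\<bar> \<le> N \<longrightarrow> \<bar>X 0 t \<omega> x - X 0 s \<omega> x\<bar> \<le> \<epsilon>)"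
proof -
  obtain C where ag: "\<forall>z. \<bar>a z\<bar> \<le> C * (1 + \<bar>z\<bar>)" using assms(3) unfolding linear_growth_def by blast
  have HF: "harris_flow M \<phi> a X" by fact
  note H = HF[unfolded harris_flow_def]
  have P: "prob_space M" using H by (rule conjunct1)
  note HA = conjunct1[OF conjunct2[OF H]]
  note Hcoc = conjunct1[OF conjunct2[OF conjunct2[OF conjunct2[OF H]]]]
  note Hw = conjunct1[OF conjunct2[OF conjunct2[OF conjunct2[OF conjunct2[OF conjunct2[OF conjunct2[OF conjunct2[OF H]]]]]]]]
  have Xm: "\<And>u v y. 0 \<le> u \<Longrightarrow> u \<le> v \<Longrightarrow> (\<lambda>\<omega>. X u v \<omega> y) \<in> borel_measurable M"
    using HA by blast
  have cad: "\<And>u v \<omega>. 0 \<le> u \<Longrightarrow> u \<le> v \<Longrightarrow> \<omega> \<in> space M \<Longrightarrow> cadlag_nondecr (X u v \<omega>)"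
    using HA by blast
  have coc: "\<And>s t r. 0 \<le> s \<Longrightarrow> s \<le> t \<Longrightarrow> t \<le> r \<Longrightarrow> AE \<omega> in M. X s r \<omega> = X t r \<omega> \<circ> X s t \<omega>"
    using Hcoc by blast
  have wf: "\<And>x s. 0 \<le> s \<Longrightarrow> wiener_from M (flow_filtration M X s) s
          (\<lambda>t \<omega>. X s t \<omega> x - x - (LBINT r=s..t. a (X s r \<omega> x)))"
    using Hw by blast
  define Good where "Good = (\<lambda>(N::nat) (\<epsilon>::real) \<omega>. \<exists>h>0. \<forall>s\<in>{0..T}. \<forall>t\<in>{0..T}. \<bar>t - s\<bar> \<le> h \<longrightarrow>
           (\<forall>x. \<bar>x\<bar> \<le> real N \<longrightarrow> \<bar>X 0 t \<omega> x - X 0 s \<omega> x\<bar> \<le> \<epsilon>))"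
  have each: "AE \<omega> in M. Good N (1 / (real j + 1)) \<omega>" for N j :: nat
  proof (rule AE_from_small[OF P])
    fix \<eta> :: real assume "0 < \<eta>"
    then show "\<exists>Z\<in>sets M. measure M Z \<le> \<eta> \<and> (AE \<omega> in M. \<omega> \<notin> Z \<longrightarrow> Good N (1 / (real j + 1)) \<omega>)"
      using core[OF P assms(2) ag Xm cad coc wf assms(5), of "1 / (real j + 1)" \<eta> N]
      unfolding Good_def by simp
  qed
  have all: "AE \<omega> in M. \<forall>N::nat. \<forall>j::nat. Good N (1 / (real j + 1)) \<omega>"
    using each by (simp add: AE_all_countable)
  then show ?thesis
  proof eventually_elim
    fix \<omega> assume G: "\<forall>N::nat. \<forall>j::nat. Good N (1 / (real j + 1)) \<omega>"
    show "\<forall>N>0. \<forall>\<epsilon>>0. \<exists>h>0. \<forall>s\<in>{0..T}. \<forall>t\<in>{0..T}. \<bar>t - s\<bar> \<le> h \<longrightarrow>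
           (\<forall>x. \<bar>x\<bar> \<le> N \<longrightarrow> \<bar>X 0 t \<omega> x - X 0 s \<omega> x\<bar> \<le> \<epsilon>)"
    proof (intro allI impI)
      fix N \<epsilon> :: real assume N: "0 < N" and e: "0 < \<epsilon>"
      obtain Nn :: nat where Nn: "N \<le> real Nn" using real_arch_simple by blast
      obtain j where j: "inverse (real (Suc j)) < \<epsilon>" using reals_Archimedean[OF e] by blast
      have je: "1 / (real j + 1) \<le> \<epsilon>" using j by (simp add: inverse_eq_divide add.commute)
      obtain h where h: "h > 0" "\<forall>s\<in>{0..T}. \<forall>t\<in>{0..T}. \<bar>t - s\<bar> \<le> h \<longrightarrow>
           (\<forall>x. \<bar>x\<bar> \<le> real Nn \<longrightarrow> \<bar>X 0 t \<omega> x - X 0 s \<omega> x\<bar> \<le> 1 / (real j + 1))"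
        using G unfolding Good_def by blast
      show "\<exists>h>0. \<forall>s\<in>{0..T}. \<forall>t\<in>{0..T}. \<bar>t - s\<bar> \<le> h \<longrightarrow>
           (\<forall>x. \<bar>x\<bar> \<le> N \<longrightarrow> \<bar>X 0 t \<omega> x - X 0 s \<omega> x\<bar> \<le> \<epsilon>)"
      proof (intro exI[of _ h] conjI ballI impI allI)
        show "0 < h" by fact
        fix s t x assume "s \<in> {0..T}" "t \<in> {0..T}" "\<bar>t - s\<bar> \<le> h" "\<bar>x\<bar> \<le> N"
        then have "\<bar>X 0 t \<omega> x - X 0 s \<omega> x\<bar> \<le> 1 / (real j + 1)" using h(2) Nn by force
        then show "\<bar>X 0 t \<omega> x - X 0 s \<omega> x\<bar> \<le> \<epsilon>" using je by linarith
      qed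
    qed
  qed
qed


end
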